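(* Let $d,H,\mathfrak{d}\in\mathbb{N}$, $\mathscr{a}\in\mathbb{R}$, $\mathscr{b}\in(\mathscr{a},\infty)$, $f\in C([\mathscr{a},\mathscr{b}]^d,\mathbb{R})$ with $\mathfrak{d}=dH+2H+1$. Let $\mathfrak{R}_r\in C(\mathbb{R},\mathbb{R})$, $r\in\mathbb{N}\cup\{\infty\}$, satisfy for all $x\in\mathbb{R}$ that $\mathfrak{R}_r\in C^1(\mathbb{R},\mathbb{R})$ for all $r\in\mathbb{N}$, $\mathfrak{R}_\infty(x)=\max\{x,0\}$, $\sup_{r\in\mathbb{N}}\sup_{y\in[-|x|,|x|]}(|\mathfrak{R}_r(y)|+|(\mathfrak{R}_r)'(y)|)<\infty$, and $\limsup_{r\to\infty}\big(|\mathfrak{R}_r(x)-\mathfrak{R}_\infty(x)|+|(\mathfrak{R}_r)'(x)-\mathbb{1}_{(0,\infty)}(x)|\big)=0$. Let $\mu$ be a finite measure on $\mathcal{B}([\mathscr{a},\mathscr{b}]^d)$ which is absolutely continuous with respect to the Lebesgue measure on $[\mathscr{a},\mathscr{b}]^d$. For $r\in\mathbb{N}\cup\{\infty\}$ and $\theta=(\theta_1,\dots,\theta_{\mathfrak{d}})\in\mathbb{R}^{\mathfrak{d}}$ let $$\mathcal{L}_r(\theta)=\int_{[\mathscr{a},\mathscr{b}]^d}\Big(f(x_1,\dots,x_d)-\theta_{\mathfrak{d}}-\sum_{i=1}^H\theta_{H(d+1)+i}\,\mathfrak{R}_r\Big(\theta_{Hd+i}+\sum_{j=1}^d\theta_{(i-1)d+j}x_j\Big)\Big)^2\,\mu(\mathrm{d}(x_1,\dots,x_d)),$$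 let $\|\cdot\|$ be the standard Euclidean norm on $\mathbb{R}^{\mathfrak{d}}$, and let $\mathcal{G}\colon\mathbb{R}^{\mathfrak{d}}\to\mathbb{R}^{\mathfrak{d}}$ satisfy $\mathcal{G}(\theta)=\lim_{r\to\infty}(\nabla\mathcal{L}_r)(\theta)$ for every $\theta\in\mathbb{R}^{\mathfrak{d}}$ for which $((\nabla\mathcal{L}_r)(\theta))_{r\in\mathbb{N}}$ is convergent. Then: (i) $\mathcal{G}$ is locally bounded and measurable; (ii) $\mathbb{R}^{\mathfrak{d}}\ni\theta\mapsto\|\mathcal{G}(\theta)\|\in\mathbb{R}$ is lower semicontinuous; (iii) there exists an open $U\subseteq\mathbb{R}^{\mathfrak{d}}$ with $\int_{\mathbb{R}^{\mathfrak{d}}\setminus U}1\,\mathrm{d}x=0$, $(\mathcal{L}_\infty)|_U\in C^1(U,\mathbb{R})$, and $\nabla((\mathcal{L}_\infty)|_U)=\mathcal{G}|_U$; (iv) for every $\Theta\in C([0,\infty),\mathbb{R}^{\mathfrak{d}})$ with $\sup_{t\in[0,\infty)}\|\Theta_t\|<\infty$ and $\Theta_t=\Theta_0-\int_0^t\mathcal{G}(\Theta_s)\,\mathrm{d}s$ for all $t\in[0,\infty)$ there exists $\vartheta\in\mathcal{G}^{-1}(\{0\})$ such that $\limsup_{t\to\infty}\mathcal{L}_\infty(\Theta_t)=\mathcal{L}_\infty(\vartheta)$; (v) for every $\Theta\in C([0,\infty),\mathbb{R}^{\mathfrak{d}})$ with $\sup_{t\in[0,\infty)}\|\Theta_t\|<\infty$,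 $\Theta_t=\Theta_0-\int_0^t\mathcal{G}(\Theta_s)\,\mathrm{d}s$ for all $t\in[0,\infty)$, and $\mathcal{L}_\infty(\Theta_0)<\mathcal{L}_\infty(\theta)$ for all $\theta\in\mathcal{G}^{-1}(\{0\})\cap(\mathcal{L}_\infty)^{-1}((\inf_{\vartheta\in\mathbb{R}^{\mathfrak{d}}}\mathcal{L}_\infty(\vartheta),\infty))$, it holds that $\limsup_{t\to\infty}\mathcal{L}_\infty(\Theta_t)=\inf_{\vartheta\in\mathbb{R}^{\mathfrak{d}}}\mathcal{L}_\infty(\vartheta)$.
   Context: $\mathbb{1}_A$ denotes the indicator function of a set $A$. $\mathcal{G}^{-1}(\{0\})$ is the set of $\theta$ with $\mathcal{G}(\theta)=0$. *)

theory Defs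
  imports "HOL-Analysis.Analysis"
begin

definition gradient :: "('a::euclidean_space \<Rightarrow> real) \<Rightarrow> 'a \<Rightarrow> 'a" where
  "gradient F x = (THE g. (F has_derivative (\<lambda>h. g \<bullet> h)) (at x))"

definition lower_semicont :: "('a::topological_space \<Rightarrow> real) \<Rightarrow> bool" where
  "lower_semicont F \<longleftrightarrow> (\<forall>x. \<forall>e>0. \<forall>\<^sub>F y in at x. F x - e < F y)"

definition cube :: "real \<Rightarrow> real \<Rightarrow> (real^'d) set" where
  "cube a b = cbox (\<chi> i. a) (\<chi> i. b)"

text \<open>Risk of a shallow network with H hidden neurons and activation act.
  Parameter coordinates are numbered 1..dH+2H+1 via e, input coordinates 1..d via c.\<close>
definition nn_loss ::
  "(real^'d) measure \<Rightarrow> (real^'d \<Rightarrow> real) \<Rightarrow> nat \<Rightarrow> nat \<Rightarrow> (nat \<Rightarrow> 'n) \<Rightarrow> (nat \<Rightarrow> 'd)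
    \<Rightarrow> (real \<Rightarrow> real) \<Rightarrow> real^'n \<Rightarrow> real" where
  "nn_loss \<mu> f d H e c act \<theta> =
     (\<integral>x. (f x - \<theta> $ e (d*H + 2*H + 1)
        - (\<Sum>i=1..H. \<theta> $ e (H*(d+1) + i) *
             act (\<theta> $ e (H*d + i) + (\<Sum>j=1..d. \<theta> $ e ((i-1)*d + j) * x $ c j))))^2 \<partial>\<mu>)"

end

theory Submission
  imports Defs
begin

lemma integral_cont_at:
  fixes F :: "'a::metric_space \<Rightarrow> 'b \<Rightarrow> real"
  assumes fin: "finite_measure M"
    and meas: "\<And>\<theta>. F \<theta> \<in> borel_measurable M"
    and cont: "AE x in M. isCont (\<lambda>\<theta>. F \<theta> x) \<theta>0"
    and rho: "\<rho> > 0"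
    and bnd: "\<And>\<theta> x. dist \<theta> \<theta>0 < \<rho> \<Longrightarrow> x \<in> space M \<Longrightarrow> \<bar>F \<theta> x\<bar> \<le> C"
  shows "isCont (\<lambda>\<theta>. \<integral>x. F \<theta> x \<partial>M) \<theta>0"
  unfolding continuous_at_sequentially comp_def
proof (intro allI impI)
  fix X assume X: "X \<longlonglongrightarrow> \<theta>0"
  then obtain N where N: "\<And>n. n \<ge> N \<Longrightarrow> dist (X n) \<theta>0 < \<rho>"
    using rho by (metis eventually_sequentially tendsto_iff)
  have "(\<lambda>n. \<integral>x. F (X (n + N)) x \<partial>M) \<longlonglongrightarrow> (\<integral>x. F \<theta>0 x \<partial>M)"
  proof (rule integral_dominated_convergence[where w="\<lambda>_. C"])
    show "F \<theta>0 \<in> borel_measurable M" by (rule meas)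
    show "(\<lambda>x. F (X (n + N)) x) \<in> borel_measurable M" for n using meas by simp
    show "integrable M (\<lambda>_. C)" using fin finite_measure.integrable_const by blast
    show "AE x in M. (\<lambda>n. F (X (n + N)) x) \<longlonglongrightarrow> F \<theta>0 x"
      using cont
    proof eventually_elim
      case (elim x)
      have "(\<lambda>n. X (n + N)) \<longlonglongrightarrow> \<theta>0" using X by (rule LIMSEQ_ignore_initial_segment)
      then show ?case using elim continuous_at_sequentially[of \<theta>0 "\<lambda>\<theta>. F \<theta> x"] by (simp add: comp_def)
    qed
    show "AE x in M. norm (F (X (n + N)) x) \<le> C" for n
      using N[of "n+N"] bnd by (auto intro!: AE_I2)
  qed
  then show "(\<lambda>n. \<integral>x. F (X n) x \<partial>M) \<longlonglongrightarrow> (\<integral>x. F \<theta>0 x \<partial>M)"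
    by (rule LIMSEQ_offset)
qed


lemma integral_has_derivative:
  fixes F :: "'a::euclidean_space \<Rightarrow> 'b \<Rightarrow> real" and g :: "'b \<Rightarrow> 'a"
  assumes fin: "finite_measure M"
   and meas: "\<And>\<theta>. F \<theta> \<in> borel_measurable M"
   and intF: "\<And>\<theta>. integrable M (F \<theta>)"
   and gmeas: "g \<in> borel_measurable M"
   and der: "AE x in M. ((\<lambda>\<theta>. F \<theta> x) has_derivative (\<lambda>h. g x \<bullet> h)) (at \<theta>0)"
   and lip: "\<And>x h. x \<in> space M \<Longrightarrow> norm h \<le> 1 \<Longrightarrow> \<bar>F (\<theta>0 + h) x - F \<theta>0 x\<bar> \<le> C * norm h"
   and gb: "\<And>x. x \<in> space M \<Longrightarrow> norm (g x) \<le> C"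
  shows "((\<lambda>\<theta>. \<integral>x. F \<theta> x \<partial>M) has_derivative (\<lambda>h. (\<integral>x. g x \<partial>M) \<bullet> h)) (at \<theta>0)"
proof -
  have intg: "integrable M g"
    using gb gmeas fin by (intro finite_measure.integrable_const_bound[where B=C]) (auto intro!: AE_I2)
  define Q where "Q y x = (F y x - F \<theta>0 x - g x \<bullet> (y - \<theta>0)) / norm (y - \<theta>0)" for y x
  have eq: "((\<lambda>\<theta>. \<integral>x. F \<theta> x \<partial>M) y - (\<lambda>\<theta>. \<integral>x. F \<theta> x \<partial>M) \<theta>0 - (\<integral>x. g x \<partial>M) \<bullet> (y - \<theta>0)) /\<^sub>R norm (y - \<theta>0)
     = (\<integral>x. Q y x \<partial>M)" for y
  proof -
    have "(\<integral>x. g x \<bullet> (y - \<theta>0) \<partial>M) = (\<integral>x. g x \<partial>M) \<bullet> (y - \<theta>0)"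
      using intg by simp
    moreover have "(\<integral>x. F y x - F \<theta>0 x - g x \<bullet> (y - \<theta>0) \<partial>M) = (\<integral>x. F y x \<partial>M) - (\<integral>x. F \<theta>0 x \<partial>M) - (\<integral>x. g x \<bullet> (y - \<theta>0) \<partial>M)"
    proof -
      have i1: "integrable M (\<lambda>x. g x \<bullet> (y - \<theta>0))" using intg by (rule integrable_inner_left)
      have i2: "integrable M (\<lambda>x. F y x - F \<theta>0 x)" using intF[of y] intF[of \<theta>0] by (rule Bochner_Integration.integrable_diff)
      show ?thesis using i1 i2 intF by (simp add: integral_diff)
    qed
    ultimately show ?thesis unfolding Q_def by (simp add: divide_inverse)
  qed
  have "((\<lambda>y. \<integral>x. Q y x \<partial>M) \<longlongrightarrow> 0) (at \<theta>0)"
    unfolding tendsto_at_iff_sequentially comp_def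
  proof (intro allI impI)
    fix X assume Xne: "\<forall>i. X i \<in> UNIV - {\<theta>0}" and X: "X \<longlonglongrightarrow> \<theta>0"
    have "\<forall>\<^sub>F n in sequentially. dist (X n) \<theta>0 < 1" using X by (simp add: tendsto_iff)
    then obtain N where N: "\<And>n. n \<ge> N \<Longrightarrow> norm (X n - \<theta>0) < 1"
      unfolding eventually_sequentially dist_norm by blast
    have "(\<lambda>n. \<integral>x. Q (X (n + N)) x \<partial>M) \<longlonglongrightarrow> (\<integral>x. 0 \<partial>M)"
    proof (rule integral_dominated_convergence[where w="\<lambda>_. 2 * C"])
      show "(\<lambda>x. 0::real) \<in> borel_measurable M" by simp
      show "(\<lambda>x. Q (X (n + N)) x) \<in> borel_measurable M" for n
        unfolding Q_def
        by (intro borel_measurable_divide borel_measurable_diff borel_measurable_inner meas gmeas borel_measurable_const)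
      show "integrable M (\<lambda>_. 2 * C)" using fin finite_measure.integrable_const by blast
      show "AE x in M. (\<lambda>n. Q (X (n + N)) x) \<longlonglongrightarrow> 0"
        using der
      proof eventually_elim
        case (elim x)
        then have "((\<lambda>y. ((F y x - F \<theta>0 x) - g x \<bullet> (y - \<theta>0)) /\<^sub>R norm (y - \<theta>0)) \<longlongrightarrow> 0) (at \<theta>0)"
          by (simp add: has_derivative_at_within)
        then have "((\<lambda>y. Q y x) \<longlongrightarrow> 0) (at \<theta>0)"
          unfolding Q_def by (simp add: divide_inverse mult.commute)
        moreover have "(\<lambda>n. X (n + N)) \<longlonglongrightarrow> \<theta>0" using X by (rule LIMSEQ_ignore_initial_segment)
        ultimately show ?case using Xne unfolding tendsto_at_iff_sequentially comp_def by auto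
      qed
      show "AE x in M. norm (Q (X (n + N)) x) \<le> 2 * C" for n
      proof (rule AE_I2)
        fix x assume x: "x \<in> space M"
        define h where "h = X (n + N) - \<theta>0"
        have hn: "norm h < 1" using N[of "n+N"] by (simp add: h_def)
        have hp: "norm h > 0" using Xne by (simp add: h_def)
        have "\<bar>F (\<theta>0 + h) x - F \<theta>0 x - g x \<bullet> h\<bar> \<le> \<bar>F (\<theta>0 + h) x - F \<theta>0 x\<bar> + \<bar>g x \<bullet> h\<bar>" by linarith
        also have "\<dots> \<le> C * norm h + C * norm h"
        proof (rule add_mono)
          show "\<bar>F (\<theta>0 + h) x - F \<theta>0 x\<bar> \<le> C * norm h" using lip[OF x, of h] hn by simp
          have "norm (g x) * norm h \<le> C * norm h" using gb[OF x] by (simp add: mult_right_mono)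
          then show "\<bar>g x \<bullet> h\<bar> \<le> C * norm h" using Cauchy_Schwarz_ineq2[of "g x" h] by linarith
        qed
        finally have "\<bar>F (\<theta>0 + h) x - F \<theta>0 x - g x \<bullet> h\<bar> \<le> 2 * C * norm h" by simp
        then have "\<bar>F (\<theta>0 + h) x - F \<theta>0 x - g x \<bullet> h\<bar> / norm h \<le> 2 * C"
          using hp by (simp add: divide_le_eq)
        moreover have "\<theta>0 + h = X (n + N)" by (simp add: h_def)
        ultimately show "norm (Q (X (n + N)) x) \<le> 2 * C"
          unfolding Q_def by (simp add: h_def abs_divide)
      qed
    qed
    then show "(\<lambda>n. \<integral>x. Q (X n) x \<partial>M) \<longlonglongrightarrow> 0" by (simp add: LIMSEQ_offset)
  qed
  then show ?thesis
    unfolding has_derivative_at_within using eq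
    by (simp add: bounded_linear_inner_right)
qed


lemma linear_as_inner:
  fixes l :: "real^'n \<Rightarrow> real"
  assumes "linear l"
  shows "l h = (\<chi> k. l (axis k 1)) \<bullet> h"
proof -
  have "l h = l (\<Sum>i\<in>UNIV. h$i *\<^sub>R axis i 1)"
    using basis_expansion[of h] by (simp add: scalar_mult_eq_scaleR)
  also have "\<dots> = (\<Sum>i\<in>UNIV. h$i * l (axis i 1))"
    using assms by (simp add: linear_sum linear_scale)
  also have "\<dots> = (\<chi> k. l (axis k 1)) \<bullet> h"
    by (simp add: inner_vec_def mult.commute)
  finally show ?thesis .
qed

locale nnsetup =
  fixes d H :: nat and e :: "nat \<Rightarrow> 'n::finite" and c :: "nat \<Rightarrow> 'd::finite"
    and a b :: real and f :: "real^'d \<Rightarrow> real" and \<mu> :: "(real^'d) measure"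
  assumes e_bij: "bij_betw e {1..d*H + 2*H + 1} UNIV"
    and c_bij: "bij_betw c {1..d} UNIV"
    and f_cont: "continuous_on (cube a b) f"
    and mu_sets: "sets \<mu> = sets (restrict_space lborel (cube a b))"
    and mu_fin: "finite_measure \<mu>"
    and mu_ac: "absolutely_continuous (restrict_space lborel (cube a b)) \<mu>"
begin

definition inn :: "real^'n \<Rightarrow> real^'d \<Rightarrow> nat \<Rightarrow> real" where
  "inn \<theta> x i = \<theta>$e(H*d+i) + (\<Sum>j=1..d. \<theta>$e((i-1)*d+j) * x$c j)"

definition outp :: "(real \<Rightarrow> real) \<Rightarrow> real^'n \<Rightarrow> real^'d \<Rightarrow> real" where
  "outp \<sigma> \<theta> x = \<theta>$e(d*H+2*H+1) + (\<Sum>i=1..H. \<theta>$e(H*(d+1)+i) * \<sigma> (inn \<theta> x i))"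

definition Dout :: "(real \<Rightarrow> real) \<Rightarrow> (real \<Rightarrow> real) \<Rightarrow> real^'n \<Rightarrow> real^'d \<Rightarrow> real^'n \<Rightarrow> real" where
  "Dout \<sigma> \<sigma>' \<theta> x h = h$e(d*H+2*H+1) + (\<Sum>i=1..H. h$e(H*(d+1)+i) * \<sigma> (inn \<theta> x i)
        + \<theta>$e(H*(d+1)+i) * (\<sigma>' (inn \<theta> x i) * inn h x i))"

definition Fl :: "(real \<Rightarrow> real) \<Rightarrow> real^'n \<Rightarrow> real^'d \<Rightarrow> real" where
  "Fl \<sigma> \<theta> x = (f x - outp \<sigma> \<theta> x)\<^sup>2"

definition gv :: "(real \<Rightarrow> real) \<Rightarrow> (real \<Rightarrow> real) \<Rightarrow> real^'n \<Rightarrow> real^'d \<Rightarrow> real^'n" where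
  "gv \<sigma> \<sigma>' \<theta> x = (\<chi> k. -2 * (f x - outp \<sigma> \<theta> x) * Dout \<sigma> \<sigma>' \<theta> x (axis k 1))"

lemma nn_loss_eq: "nn_loss \<mu> f d H e c \<sigma> \<theta> = (\<integral>x. Fl \<sigma> \<theta> x \<partial>\<mu>)"
  unfolding nn_loss_def Fl_def outp_def inn_def by (simp add: diff_diff_eq)

lemma space_mu: "space \<mu> = cube a b"
  using sets_eq_imp_space_eq[OF mu_sets] by (simp add: space_restrict_space)

lemma meas_mu: "g \<in> borel_measurable borel \<Longrightarrow> g \<in> borel_measurable \<mu>"
  by (subst measurable_cong_sets[OF mu_sets refl], rule measurable_restrict_space1) simp

lemma f_meas: "f \<in> borel_measurable \<mu>"
proof -
  have "f \<in> borel_measurable (restrict_space borel (cube a b))"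
    using f_cont by (rule borel_measurable_continuous_on_restrict)
  then show ?thesis
    by (subst measurable_cong_sets[OF mu_sets refl], subst measurable_cong_sets[OF sets_restrict_space_cong[OF sets_lborel] refl])
qed

lemma nth_meas: "(\<lambda>x. x $ k) \<in> borel_measurable \<mu>"
  by (rule meas_mu, rule borel_measurable_continuous_onI) (intro continuous_intros)

definition XB where "XB = \<bar>a\<bar> + \<bar>b\<bar>"

lemma cube_bound: "x \<in> cube a b \<Longrightarrow> \<bar>x $ k\<bar> \<le> XB"
  unfolding cube_def XB_def mem_box_cart by (drule spec[of _ k]) auto

lemma XB_nonneg: "XB \<ge> 0" by (simp add: XB_def)

lemma f_bound: "\<exists>Fb\<ge>0. \<forall>x\<in>cube a b. \<bar>f x\<bar> \<le> Fb"
proof -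
  have "compact (f ` cube a b)"
    unfolding cube_def by (rule compact_continuous_image[OF _ compact_cbox]) (use f_cont in \<open>simp add: cube_def\<close>)
  then obtain B where "\<forall>y\<in>f ` cube a b. norm y \<le> B"
    using compact_imp_bounded bounded_iff by metis
  then show ?thesis by (intro exI[of _ "max B 0"]) auto
qed

lemma inn_add: "inn (\<theta> + h) x i = inn \<theta> x i + inn h x i"
  by (simp add: inn_def algebra_simps sum.distrib)

lemma inn_scale: "inn (r *\<^sub>R h) x i = r * inn h x i"
  by (simp add: inn_def algebra_simps sum_distrib_left)

lemma inn_diff: "inn (\<theta> - h) x i = inn \<theta> x i - inn h x i"
  by (simp add: inn_def algebra_simps sum_subtractf)

lemma inn_bound:
  assumes "x \<in> cube a b"
  shows "\<bar>inn \<theta> x i\<bar> \<le> norm \<theta> * (1 + real d * XB)"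
proof -
  have "\<bar>\<Sum>j=1..d. \<theta>$e((i-1)*d+j) * x$c j\<bar> \<le> (\<Sum>j=1..d. norm \<theta> * XB)"
  proof (rule order_trans[OF sum_abs], rule sum_mono)
    fix j
    show "\<bar>\<theta>$e((i-1)*d+j) * x$c j\<bar> \<le> norm \<theta> * XB"
      unfolding abs_mult
      by (rule mult_mono[OF component_le_norm_cart cube_bound[OF assms]]) auto
  qed
  then have "\<bar>\<Sum>j=1..d. \<theta>$e((i-1)*d+j) * x$c j\<bar> \<le> norm \<theta> * (real d * XB)" by (simp add: mult.left_commute)
  moreover have "\<bar>\<theta>$e(H*d+i)\<bar> \<le> norm \<theta>" by (rule component_le_norm_cart)
  moreover have "norm \<theta> * (real d * XB) = real d * (norm \<theta> * XB)" by simp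
  ultimately show ?thesis unfolding inn_def by (simp add: algebra_simps)
qed

lemma inn_cont: "continuous_on UNIV (\<lambda>\<theta>. inn \<theta> x i)"
  unfolding inn_def by (intro continuous_intros)

lemma inn_meas: "(\<lambda>x. inn \<theta> x i) \<in> borel_measurable \<mu>"
  unfolding inn_def using nth_meas by measurable

lemma inn_has_derivative: "((\<lambda>\<theta>. inn \<theta> x i) has_derivative (\<lambda>h. inn h x i)) (at \<theta>)"
proof -
  have "linear (\<lambda>h. inn h x i)"
    by (rule linearI) (simp_all add: inn_add inn_scale)
  then have "bounded_linear (\<lambda>h. inn h x i)" by (simp add: linear_conv_bounded_linear)
  then show ?thesis by (rule bounded_linear_imp_has_derivative)
qed

lemma Dout_linear: "linear (Dout \<sigma> \<sigma>' \<theta> x)"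
  by (rule linearI) (simp_all add: Dout_def inn_add inn_scale algebra_simps sum.distrib sum_distrib_left)

lemma outp_has_derivative:
  assumes "\<And>i. i \<in> {1..H} \<Longrightarrow> (\<sigma> has_real_derivative \<sigma>' (inn \<theta> x i)) (at (inn \<theta> x i))"
  shows "((\<lambda>\<theta>. outp \<sigma> \<theta> x) has_derivative Dout \<sigma> \<sigma>' \<theta> x) (at \<theta>)"
proof -
  have s: "((\<lambda>\<theta>. \<sigma> (inn \<theta> x i)) has_derivative (\<lambda>h. \<sigma>' (inn \<theta> x i) * inn h x i)) (at \<theta>)"
    if "i \<in> {1..H}" for i
  proof -
    have "(\<sigma> has_derivative (\<lambda>t. \<sigma>' (inn \<theta> x i) * t)) (at (inn \<theta> x i))"
      using assms[OF that] by (simp add: has_field_derivative_def)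
    from has_derivative_compose[OF inn_has_derivative this] show ?thesis .
  qed
  have "((\<lambda>\<theta>. \<theta>$e(d*H+2*H+1) + (\<Sum>i=1..H. \<theta>$e(H*(d+1)+i) * \<sigma> (inn \<theta> x i))) has_derivative
     (\<lambda>h. h$e(d*H+2*H+1) + (\<Sum>i=1..H. \<theta>$e(H*(d+1)+i) * (\<sigma>' (inn \<theta> x i) * inn h x i) + h$e(H*(d+1)+i) * \<sigma> (inn \<theta> x i)))) (at \<theta>)"
    by (intro has_derivative_add has_derivative_sum has_derivative_mult s bounded_linear_imp_has_derivative bounded_linear_vec_nth) auto
  then show ?thesis unfolding outp_def Dout_def by (simp add: add.commute)
qed

lemma Fl_has_derivative:
  assumes "\<And>i. i \<in> {1..H} \<Longrightarrow> (\<sigma> has_real_derivative \<sigma>' (inn \<theta> x i)) (at (inn \<theta> x i))"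
  shows "((\<lambda>\<theta>. Fl \<sigma> \<theta> x) has_derivative (\<lambda>h. gv \<sigma> \<sigma>' \<theta> x \<bullet> h)) (at \<theta>)"
proof -
  have "((\<lambda>\<theta>. (f x - outp \<sigma> \<theta> x) * (f x - outp \<sigma> \<theta> x)) has_derivative
     (\<lambda>h. (f x - outp \<sigma> \<theta> x) * (0 - Dout \<sigma> \<sigma>' \<theta> x h) + (0 - Dout \<sigma> \<sigma>' \<theta> x h) * (f x - outp \<sigma> \<theta> x))) (at \<theta>)"
    by (intro has_derivative_mult has_derivative_diff has_derivative_const outp_has_derivative[OF assms])
  moreover have "(f x - outp \<sigma> \<theta> x) * (0 - Dout \<sigma> \<sigma>' \<theta> x h) + (0 - Dout \<sigma> \<sigma>' \<theta> x h) * (f x - outp \<sigma> \<theta> x)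
     = gv \<sigma> \<sigma>' \<theta> x \<bullet> h" for h
  proof -
    have l: "linear (\<lambda>h. -2 * (f x - outp \<sigma> \<theta> x) * Dout \<sigma> \<sigma>' \<theta> x h)"
      using Dout_linear[of \<sigma> \<sigma>' \<theta> x] by (simp add: linear_iff algebra_simps)
    have "(f x - outp \<sigma> \<theta> x) * (0 - Dout \<sigma> \<sigma>' \<theta> x h) + (0 - Dout \<sigma> \<sigma>' \<theta> x h) * (f x - outp \<sigma> \<theta> x)
      = -2 * (f x - outp \<sigma> \<theta> x) * Dout \<sigma> \<sigma>' \<theta> x h" by (simp add: algebra_simps)
    also have "\<dots> = gv \<sigma> \<sigma>' \<theta> x \<bullet> h" unfolding gv_def by (rule linear_as_inner[OF l])
    finally show ?thesis .
  qed
  ultimately show ?thesis unfolding Fl_def power2_eq_square by simp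
qed


definition actb :: "(real \<Rightarrow> real) \<Rightarrow> (real \<Rightarrow> real) \<Rightarrow> real \<Rightarrow> real \<Rightarrow> bool" where
  "actb \<sigma> \<sigma>' K B \<longleftrightarrow> (\<forall>y. \<bar>y\<bar> \<le> K \<longrightarrow> \<bar>\<sigma> y\<bar> \<le> B \<and> \<bar>\<sigma>' y\<bar> \<le> B) \<and>
     (\<forall>y z. \<bar>y\<bar> \<le> K \<longrightarrow> \<bar>z\<bar> \<le> K \<longrightarrow> \<bar>\<sigma> y - \<sigma> z\<bar> \<le> B * \<bar>y - z\<bar>)"

definition Kof :: "real \<Rightarrow> real" where "Kof \<rho> = \<rho> * (1 + real d * XB)"

definition Fb where "Fb = (SOME F. F \<ge> 0 \<and> (\<forall>x\<in>cube a b. \<bar>f x\<bar> \<le> F))"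

lemma Fb: "Fb \<ge> 0" "x \<in> cube a b \<Longrightarrow> \<bar>f x\<bar> \<le> Fb"
  using someI_ex[OF f_bound[unfolded Bex_def]] unfolding Fb_def by auto

definition Lc :: "real \<Rightarrow> real \<Rightarrow> real" where
  "Lc \<rho> B = 1 + real H * (B + \<rho> * (B * (1 + real d * XB)))"

definition Ob :: "real \<Rightarrow> real \<Rightarrow> real" where
  "Ob \<rho> B = Fb + \<rho> + real H * (\<rho> * B)"

lemma inn_le_K: "x \<in> cube a b \<Longrightarrow> norm \<theta> \<le> \<rho> \<Longrightarrow> \<bar>inn \<theta> x i\<bar> \<le> Kof \<rho>"
proof -
  assume x: "x \<in> cube a b" and th: "norm \<theta> \<le> \<rho>"
  have "norm \<theta> * (1 + real d * XB) \<le> \<rho> * (1 + real d * XB)"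
    using th XB_nonneg by (intro mult_right_mono) auto
  then show ?thesis unfolding Kof_def using inn_bound[OF x, of \<theta> i] by linarith
qed

lemma actb_B: "actb \<sigma> \<sigma>' K B \<Longrightarrow> K \<ge> 0 \<Longrightarrow> B \<ge> 0"
proof -
  assume "actb \<sigma> \<sigma>' K B" "K \<ge> 0"
  then have "\<bar>\<sigma> 0\<bar> \<le> B" unfolding actb_def by auto
  then show "B \<ge> 0" by (rule order_trans[OF abs_ge_zero])
qed

lemma Kof_nonneg: "\<rho> \<ge> 0 \<Longrightarrow> Kof \<rho> \<ge> 0"
  unfolding Kof_def using XB_nonneg by simp

lemma outp_bound:
  assumes x: "x \<in> cube a b" and th: "norm \<theta> \<le> \<rho>" and A: "actb \<sigma> \<sigma>' (Kof \<rho>) B"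
  shows "\<bar>outp \<sigma> \<theta> x\<bar> \<le> \<rho> + real H * (\<rho> * B)"
proof -
  have t: "\<bar>\<theta>$e(H*(d+1)+i) * \<sigma> (inn \<theta> x i)\<bar> \<le> \<rho> * B" for i
  proof -
    have "\<bar>\<sigma> (inn \<theta> x i)\<bar> \<le> B" using A inn_le_K[OF x th] unfolding actb_def by blast
    moreover have "\<bar>\<theta>$e(H*(d+1)+i)\<bar> \<le> \<rho>" using component_le_norm_cart th by (rule order_trans)
    ultimately show ?thesis unfolding abs_mult by (intro mult_mono) auto
  qed
  have "\<bar>\<Sum>i=1..H. \<theta>$e(H*(d+1)+i) * \<sigma> (inn \<theta> x i)\<bar> \<le> (\<Sum>i=1..H. \<rho> * B)"
    by (rule order_trans[OF sum_abs sum_mono[OF t]])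
  moreover have "\<bar>\<theta>$e(d*H+2*H+1)\<bar> \<le> \<rho>" using component_le_norm_cart th by (rule order_trans)
  ultimately show ?thesis unfolding outp_def by simp
qed

lemma Fl_bound:
  assumes x: "x \<in> cube a b" and th: "norm \<theta> \<le> \<rho>" and A: "actb \<sigma> \<sigma>' (Kof \<rho>) B"
  shows "\<bar>Fl \<sigma> \<theta> x\<bar> \<le> (Ob \<rho> B)\<^sup>2"
proof -
  have "\<bar>f x - outp \<sigma> \<theta> x\<bar> \<le> Ob \<rho> B"
    using outp_bound[OF assms] Fb(2)[OF x] unfolding Ob_def by linarith
  then have "\<bar>f x - outp \<sigma> \<theta> x\<bar>\<^sup>2 \<le> (Ob \<rho> B)\<^sup>2"
    by (intro power_mono) auto
  then show ?thesis unfolding Fl_def by simp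
qed

lemma Dout_bound:
  assumes x: "x \<in> cube a b" and th: "norm \<theta> \<le> \<rho>" and A: "actb \<sigma> \<sigma>' (Kof \<rho>) B"
  shows "\<bar>Dout \<sigma> \<sigma>' \<theta> x h\<bar> \<le> norm h * Lc \<rho> B"
proof -
  have K: "\<bar>inn \<theta> x i\<bar> \<le> Kof \<rho>" for i using inn_le_K[OF x th] .
  have t: "\<bar>h$e(H*(d+1)+i) * \<sigma> (inn \<theta> x i) + \<theta>$e(H*(d+1)+i) * (\<sigma>' (inn \<theta> x i) * inn h x i)\<bar>
      \<le> norm h * (B + \<rho> * (B * (1 + real d * XB)))" for i
  proof -
    have s1: "\<bar>\<sigma> (inn \<theta> x i)\<bar> \<le> B" "\<bar>\<sigma>' (inn \<theta> x i)\<bar> \<le> B" using A K unfolding actb_def by blast+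
    have hv: "\<bar>h$e(H*(d+1)+i)\<bar> \<le> norm h" by (rule component_le_norm_cart)
    have tv: "\<bar>\<theta>$e(H*(d+1)+i)\<bar> \<le> \<rho>" using component_le_norm_cart th by (rule order_trans)
    have ih: "\<bar>inn h x i\<bar> \<le> norm h * (1 + real d * XB)" by (rule inn_bound[OF x])
    have a1: "\<bar>h$e(H*(d+1)+i) * \<sigma> (inn \<theta> x i)\<bar> \<le> norm h * B"
      unfolding abs_mult by (rule mult_mono) (use hv s1 in auto)
    have a2: "\<bar>\<sigma>' (inn \<theta> x i) * inn h x i\<bar> \<le> B * (norm h * (1 + real d * XB))"
      unfolding abs_mult by (rule mult_mono) (use ih s1 in auto)
    have a3: "\<bar>\<theta>$e(H*(d+1)+i) * (\<sigma>' (inn \<theta> x i) * inn h x i)\<bar> \<le> \<rho> * (B * (norm h * (1 + real d * XB)))"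
      unfolding abs_mult[of "\<theta>$e(H*(d+1)+i)"] by (rule mult_mono) (use tv a2 in auto)
    have "\<bar>h$e(H*(d+1)+i) * \<sigma> (inn \<theta> x i) + \<theta>$e(H*(d+1)+i) * (\<sigma>' (inn \<theta> x i) * inn h x i)\<bar>
       \<le> norm h * B + \<rho> * (B * (norm h * (1 + real d * XB)))" using a1 a3 by linarith
    also have "\<dots> = norm h * (B + \<rho> * (B * (1 + real d * XB)))" by (simp add: algebra_simps)
    finally show ?thesis .
  qed
  have "\<bar>\<Sum>i=1..H. h$e(H*(d+1)+i) * \<sigma> (inn \<theta> x i) + \<theta>$e(H*(d+1)+i) * (\<sigma>' (inn \<theta> x i) * inn h x i)\<bar>
     \<le> (\<Sum>i=1..H. norm h * (B + \<rho> * (B * (1 + real d * XB))))"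
    by (rule order_trans[OF sum_abs sum_mono[OF t]])
  moreover have "\<bar>h$e(d*H+2*H+1)\<bar> \<le> norm h" by (rule component_le_norm_cart)
  ultimately have "\<bar>Dout \<sigma> \<sigma>' \<theta> x h\<bar> \<le> norm h + real H * (norm h * (B + \<rho> * (B * (1 + real d * XB))))"
    unfolding Dout_def by simp
  also have "\<dots> = norm h * Lc \<rho> B" unfolding Lc_def by (simp add: algebra_simps)
  finally show ?thesis .
qed

lemma gv_comp_bound:
  assumes x: "x \<in> cube a b" and th: "norm \<theta> \<le> \<rho>" and A: "actb \<sigma> \<sigma>' (Kof \<rho>) B"
  shows "\<bar>gv \<sigma> \<sigma>' \<theta> x $ k\<bar> \<le> 2 * Ob \<rho> B * Lc \<rho> B"
proof -
  have o: "\<bar>f x - outp \<sigma> \<theta> x\<bar> \<le> Ob \<rho> B"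
    using outp_bound[OF assms] Fb(2)[OF x] unfolding Ob_def by linarith
  have dd: "\<bar>Dout \<sigma> \<sigma>' \<theta> x (axis k 1)\<bar> \<le> Lc \<rho> B"
    using Dout_bound[OF assms, of "axis k 1"] by simp
  have "\<bar>gv \<sigma> \<sigma>' \<theta> x $ k\<bar> = 2 * (\<bar>f x - outp \<sigma> \<theta> x\<bar> * \<bar>Dout \<sigma> \<sigma>' \<theta> x (axis k 1)\<bar>)"
    unfolding gv_def by (simp add: abs_mult abs_minus_commute) (simp add: abs_if)
  also have "\<dots> \<le> 2 * (Ob \<rho> B * Lc \<rho> B)"
    using o dd by (intro mult_left_mono mult_mono) auto
  finally show ?thesis by simp
qed

lemma gv_norm_bound:
  assumes x: "x \<in> cube a b" and th: "norm \<theta> \<le> \<rho>" and A: "actb \<sigma> \<sigma>' (Kof \<rho>) B"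
  shows "norm (gv \<sigma> \<sigma>' \<theta> x) \<le> real CARD('n) * (2 * Ob \<rho> B * Lc \<rho> B)"
proof -
  have "norm (gv \<sigma> \<sigma>' \<theta> x) \<le> (\<Sum>k\<in>UNIV. \<bar>gv \<sigma> \<sigma>' \<theta> x $ k\<bar>)" by (rule norm_le_l1_cart)
  also have "\<dots> \<le> (\<Sum>k\<in>(UNIV::'n set). 2 * Ob \<rho> B * Lc \<rho> B)"
    by (rule sum_mono, rule gv_comp_bound[OF assms])
  finally show ?thesis by simp
qed

lemma outp_lip:
  assumes x: "x \<in> cube a b" and th: "norm \<theta> \<le> \<rho>" and th': "norm \<theta>' \<le> \<rho>" and A: "actb \<sigma> \<sigma>' (Kof \<rho>) B"
  shows "\<bar>outp \<sigma> \<theta>' x - outp \<sigma> \<theta> x\<bar> \<le> norm (\<theta>' - \<theta>) * Lc \<rho> B"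
proof -
  define h where "h = \<theta>' - \<theta>"
  have t: "\<bar>\<theta>'$e(H*(d+1)+i) * \<sigma> (inn \<theta>' x i) - \<theta>$e(H*(d+1)+i) * \<sigma> (inn \<theta> x i)\<bar>
      \<le> norm h * (B + \<rho> * (B * (1 + real d * XB)))" for i
  proof -
    have s1: "\<bar>\<sigma> (inn \<theta>' x i)\<bar> \<le> B" using A inn_le_K[OF x th'] unfolding actb_def by blast
    have s2: "\<bar>\<sigma> (inn \<theta>' x i) - \<sigma> (inn \<theta> x i)\<bar> \<le> B * \<bar>inn \<theta>' x i - inn \<theta> x i\<bar>"
      using A inn_le_K[OF x th'] inn_le_K[OF x th] unfolding actb_def by blast
    have "inn \<theta>' x i - inn \<theta> x i = inn h x i" unfolding h_def inn_diff by simp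
    then have s3: "\<bar>\<sigma> (inn \<theta>' x i) - \<sigma> (inn \<theta> x i)\<bar> \<le> B * (norm h * (1 + real d * XB))"
    proof -
      have "\<rho> \<ge> 0" using th norm_ge_zero[of \<theta>] by linarith
      then have B0: "B \<ge> 0" using actb_B[OF A] Kof_nonneg by blast
      have "B * \<bar>inn h x i\<bar> \<le> B * (norm h * (1 + real d * XB))"
        using inn_bound[OF x, of h i] B0 by (rule mult_left_mono)
      then show ?thesis using s2 \<open>inn \<theta>' x i - inn \<theta> x i = inn h x i\<close> by simp
    qed
    have hv: "\<bar>h$e(H*(d+1)+i)\<bar> \<le> norm h" by (rule component_le_norm_cart)
    have tv: "\<bar>\<theta>$e(H*(d+1)+i)\<bar> \<le> \<rho>" using component_le_norm_cart th by (rule order_trans)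
    have eq: "\<theta>'$e(H*(d+1)+i) * \<sigma> (inn \<theta>' x i) - \<theta>$e(H*(d+1)+i) * \<sigma> (inn \<theta> x i)
       = h$e(H*(d+1)+i) * \<sigma> (inn \<theta>' x i) + \<theta>$e(H*(d+1)+i) * (\<sigma> (inn \<theta>' x i) - \<sigma> (inn \<theta> x i))"
      unfolding h_def by (simp add: algebra_simps)
    have a1: "\<bar>h$e(H*(d+1)+i) * \<sigma> (inn \<theta>' x i)\<bar> \<le> norm h * B"
      unfolding abs_mult by (rule mult_mono) (use hv s1 in auto)
    have a3: "\<bar>\<theta>$e(H*(d+1)+i) * (\<sigma> (inn \<theta>' x i) - \<sigma> (inn \<theta> x i))\<bar> \<le> \<rho> * (B * (norm h * (1 + real d * XB)))"
      unfolding abs_mult[of "\<theta>$e(H*(d+1)+i)"] by (rule mult_mono) (use tv s3 in auto)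
    have "\<bar>\<theta>'$e(H*(d+1)+i) * \<sigma> (inn \<theta>' x i) - \<theta>$e(H*(d+1)+i) * \<sigma> (inn \<theta> x i)\<bar>
       \<le> norm h * B + \<rho> * (B * (norm h * (1 + real d * XB)))" unfolding eq using a1 a3 by linarith
    also have "\<dots> = norm h * (B + \<rho> * (B * (1 + real d * XB)))" by (simp add: algebra_simps)
    finally show ?thesis .
  qed
  have "\<bar>(\<Sum>i=1..H. \<theta>'$e(H*(d+1)+i) * \<sigma> (inn \<theta>' x i)) - (\<Sum>i=1..H. \<theta>$e(H*(d+1)+i) * \<sigma> (inn \<theta> x i))\<bar>
     \<le> (\<Sum>i=1..H. norm h * (B + \<rho> * (B * (1 + real d * XB))))"
    unfolding sum_subtractf[symmetric] by (rule order_trans[OF sum_abs sum_mono[OF t]])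
  moreover have "\<bar>\<theta>'$e(d*H+2*H+1) - \<theta>$e(d*H+2*H+1)\<bar> \<le> norm h"
    unfolding h_def using component_le_norm_cart[of "\<theta>' - \<theta>"] by simp
  ultimately have "\<bar>outp \<sigma> \<theta>' x - outp \<sigma> \<theta> x\<bar> \<le> norm h + real H * (norm h * (B + \<rho> * (B * (1 + real d * XB))))"
    unfolding outp_def by simp
  also have "\<dots> = norm h * Lc \<rho> B" unfolding Lc_def by (simp add: algebra_simps)
  finally show ?thesis unfolding h_def .
qed

lemma Fl_lip:
  assumes x: "x \<in> cube a b" and th: "norm \<theta> \<le> \<rho>" and th': "norm \<theta>' \<le> \<rho>" and A: "actb \<sigma> \<sigma>' (Kof \<rho>) B"
  shows "\<bar>Fl \<sigma> \<theta>' x - Fl \<sigma> \<theta> x\<bar> \<le> 2 * Ob \<rho> B * Lc \<rho> B * norm (\<theta>' - \<theta>)"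
proof -
  have o1: "\<bar>f x - outp \<sigma> \<theta> x\<bar> \<le> Ob \<rho> B"
    using outp_bound[OF x th A] Fb(2)[OF x] unfolding Ob_def by linarith
  have o2: "\<bar>f x - outp \<sigma> \<theta>' x\<bar> \<le> Ob \<rho> B"
    using outp_bound[OF x th' A] Fb(2)[OF x] unfolding Ob_def by linarith
  have l: "\<bar>outp \<sigma> \<theta>' x - outp \<sigma> \<theta> x\<bar> \<le> norm (\<theta>' - \<theta>) * Lc \<rho> B" by (rule outp_lip[OF assms])
  have "Fl \<sigma> \<theta>' x - Fl \<sigma> \<theta> x = (outp \<sigma> \<theta> x - outp \<sigma> \<theta>' x) * ((f x - outp \<sigma> \<theta>' x) + (f x - outp \<sigma> \<theta> x))"
    unfolding Fl_def by (simp add: power2_eq_square algebra_simps)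
  then have "\<bar>Fl \<sigma> \<theta>' x - Fl \<sigma> \<theta> x\<bar> = \<bar>outp \<sigma> \<theta>' x - outp \<sigma> \<theta> x\<bar> * \<bar>(f x - outp \<sigma> \<theta>' x) + (f x - outp \<sigma> \<theta> x)\<bar>"
    by (simp add: abs_mult abs_minus_commute)
  also have "\<dots> \<le> (norm (\<theta>' - \<theta>) * Lc \<rho> B) * (2 * Ob \<rho> B)"
    using l o1 o2 by (intro mult_mono) auto
  finally show ?thesis by (simp add: algebra_simps)
qed

end

lemma gradient_eqI:
  fixes F :: "'a::euclidean_space \<Rightarrow> real"
  assumes "(F has_derivative (\<lambda>h. g \<bullet> h)) (at x)"
  shows "gradient F x = g"
  unfolding gradient_def
proof (rule the_equality)
  show "(F has_derivative (\<lambda>h. g \<bullet> h)) (at x)" by fact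
  fix g' assume "(F has_derivative (\<lambda>h. g' \<bullet> h)) (at x)"
  from has_derivative_unique[OF this assms] have eq: "(\<lambda>h. g' \<bullet> h) = (\<lambda>h. g \<bullet> h)" .
  show "g' = g"
  proof (rule euclidean_eqI)
    fix b :: 'a show "g' \<bullet> b = g \<bullet> b" using fun_cong[OF eq, of b] by simp
  qed
qed

lemma vec_meas:
  fixes g :: "'a \<Rightarrow> real^'n"
  assumes "\<And>k. (\<lambda>x. g x $ k) \<in> borel_measurable M"
  shows "g \<in> borel_measurable M"
  by (subst borel_measurable_euclidean_space) (auto simp: Basis_vec_def inner_axis assms)

lemma vec_integral_nth:
  fixes g :: "'a \<Rightarrow> real^'n"
  assumes "integrable M g"
  shows "(\<integral>x. g x \<partial>M) $ k = (\<integral>x. g x $ k \<partial>M)"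
proof -
  have "(\<integral>x. g x \<partial>M) \<bullet> axis k 1 = (\<integral>x. g x \<bullet> axis k 1 \<partial>M)"
    using assms by simp
  then show ?thesis by (simp add: inner_axis)
qed

context nnsetup
begin

lemma sig_inn_meas: "\<sigma> \<in> borel_measurable borel \<Longrightarrow> (\<lambda>x. \<sigma> (inn \<theta> x i)) \<in> borel_measurable \<mu>"
  by (rule measurable_compose[OF inn_meas])

lemma outp_meas: "\<sigma> \<in> borel_measurable borel \<Longrightarrow> (\<lambda>x. outp \<sigma> \<theta> x) \<in> borel_measurable \<mu>"
proof -
  assume s: "\<sigma> \<in> borel_measurable borel"
  note [measurable] = sig_inn_meas[OF s]
  show ?thesis unfolding outp_def by measurable
qed

lemma Fl_meas: "\<sigma> \<in> borel_measurable borel \<Longrightarrow> (\<lambda>x. Fl \<sigma> \<theta> x) \<in> borel_measurable \<mu>"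
proof -
  assume s: "\<sigma> \<in> borel_measurable borel"
  note [measurable] = outp_meas[OF s] f_meas
  show ?thesis unfolding Fl_def by measurable
qed

lemma Dout_meas: "\<sigma> \<in> borel_measurable borel \<Longrightarrow> \<sigma>' \<in> borel_measurable borel \<Longrightarrow>
   (\<lambda>x. Dout \<sigma> \<sigma>' \<theta> x h) \<in> borel_measurable \<mu>"
proof -
  assume s: "\<sigma> \<in> borel_measurable borel" and s': "\<sigma>' \<in> borel_measurable borel"
  note [measurable] = sig_inn_meas[OF s] sig_inn_meas[OF s'] inn_meas
  show ?thesis unfolding Dout_def by measurable
qed

lemma gv_meas: "\<sigma> \<in> borel_measurable borel \<Longrightarrow> \<sigma>' \<in> borel_measurable borel \<Longrightarrow>
   (\<lambda>x. gv \<sigma> \<sigma>' \<theta> x) \<in> borel_measurable \<mu>"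
proof -
  assume s: "\<sigma> \<in> borel_measurable borel" and s': "\<sigma>' \<in> borel_measurable borel"
  note [measurable] = outp_meas[OF s] f_meas Dout_meas[OF s s']
  show ?thesis by (rule vec_meas) (simp add: gv_def)
qed

lemma Fl_integrable:
  assumes "\<sigma> \<in> borel_measurable borel" "actb \<sigma> \<sigma>' (Kof \<rho>) B" "norm \<theta> \<le> \<rho>"
  shows "integrable \<mu> (\<lambda>x. Fl \<sigma> \<theta> x)"
  using mu_fin Fl_meas[OF assms(1)] Fl_bound[OF _ assms(3,2)]
  by (intro finite_measure.integrable_const_bound[where B="(Ob \<rho> B)\<^sup>2"]) (auto intro!: AE_I2 simp: space_mu)

lemma gv_integrable:
  assumes "\<sigma> \<in> borel_measurable borel" "\<sigma>' \<in> borel_measurable borel" "actb \<sigma> \<sigma>' (Kof \<rho>) B" "norm \<theta> \<le> \<rho>"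
  shows "integrable \<mu> (\<lambda>x. gv \<sigma> \<sigma>' \<theta> x)"
  using mu_fin gv_meas[OF assms(1,2)] gv_norm_bound[OF _ assms(4,3)]
  by (intro finite_measure.integrable_const_bound[where B="real CARD('n) * (2 * Ob \<rho> B * Lc \<rho> B)"]) (auto intro!: AE_I2 simp: space_mu)

lemma Fl_has_derivative_integral:
  assumes meas: "\<sigma> \<in> borel_measurable borel" "\<sigma>' \<in> borel_measurable borel"
    and A: "\<And>\<rho>. \<rho> \<ge> 0 \<Longrightarrow> \<exists>B. actb \<sigma> \<sigma>' (Kof \<rho>) B"
    and der: "AE x in \<mu>. \<forall>i\<in>{1..H}. (\<sigma> has_real_derivative \<sigma>' (inn \<theta>0 x i)) (at (inn \<theta>0 x i))"
  shows "((\<lambda>\<theta>. \<integral>x. Fl \<sigma> \<theta> x \<partial>\<mu>) has_derivative (\<lambda>h. (\<integral>x. gv \<sigma> \<sigma>' \<theta>0 x \<partial>\<mu>) \<bullet> h)) (at \<theta>0)"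
proof -
  define \<rho> where "\<rho> = norm \<theta>0 + 1"
  obtain B where B: "actb \<sigma> \<sigma>' (Kof \<rho>) B" using A[of \<rho>] unfolding \<rho>_def by auto
  define C where "C = max (2 * Ob \<rho> B * Lc \<rho> B) (real CARD('n) * (2 * Ob \<rho> B * Lc \<rho> B))"
  show ?thesis
  proof (rule integral_has_derivative[where C=C])
    show "finite_measure \<mu>" by (rule mu_fin)
    show "(\<lambda>x. Fl \<sigma> \<theta> x) \<in> borel_measurable \<mu>" for \<theta> using Fl_meas[OF meas(1)] .
    show "integrable \<mu> (\<lambda>x. Fl \<sigma> \<theta> x)" for \<theta>
    proof -
      obtain B' where "actb \<sigma> \<sigma>' (Kof (norm \<theta>)) B'" using A[of "norm \<theta>"] by auto
      then show ?thesis using Fl_integrable[OF meas(1)] by blast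
    qed
    show "(\<lambda>x. gv \<sigma> \<sigma>' \<theta>0 x) \<in> borel_measurable \<mu>" using gv_meas[OF meas] .
    show "AE x in \<mu>. ((\<lambda>\<theta>. Fl \<sigma> \<theta> x) has_derivative (\<lambda>h. gv \<sigma> \<sigma>' \<theta>0 x \<bullet> h)) (at \<theta>0)"
      using der by eventually_elim (rule Fl_has_derivative, auto)
    show "\<bar>Fl \<sigma> (\<theta>0 + h) x - Fl \<sigma> \<theta>0 x\<bar> \<le> C * norm h" if x: "x \<in> space \<mu>" and h: "norm h \<le> 1" for x h
    proof -
      have n1: "norm (\<theta>0 + h) \<le> \<rho>" using norm_triangle_ineq[of \<theta>0 h] h unfolding \<rho>_def by linarith
      have n2: "norm \<theta>0 \<le> \<rho>" unfolding \<rho>_def by simp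
      have "\<bar>Fl \<sigma> (\<theta>0 + h) x - Fl \<sigma> \<theta>0 x\<bar> \<le> 2 * Ob \<rho> B * Lc \<rho> B * norm h"
        using Fl_lip[OF _ n2 n1 B, of x] x by (simp add: space_mu)
      also have "\<dots> \<le> C * norm h" unfolding C_def by (intro mult_right_mono) auto
      finally show ?thesis .
    qed
    show "norm (gv \<sigma> \<sigma>' \<theta>0 x) \<le> C" if "x \<in> space \<mu>" for x
    proof -
      have "norm (gv \<sigma> \<sigma>' \<theta>0 x) \<le> real CARD('n) * (2 * Ob \<rho> B * Lc \<rho> B)"
        using gv_norm_bound[of x \<theta>0 \<rho> \<sigma> \<sigma>' B] that B by (simp add: space_mu \<rho>_def)
      then show ?thesis unfolding C_def by linarith
    qed
  qed
qed

lemma relu_actb: "K \<ge> 0 \<Longrightarrow> actb (\<lambda>y. max y 0) (indicator {0<..}) K (K + 1)"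
proof -
  assume K: "K \<ge> 0"
  have l: "\<bar>max y 0 - max z 0\<bar> \<le> (K + 1) * \<bar>y - z\<bar>" for y z :: real
  proof -
    have "\<bar>max y 0 - max z 0\<bar> \<le> \<bar>y - z\<bar>" by (simp add: max_def abs_if)
    also have "\<dots> \<le> (K + 1) * \<bar>y - z\<bar>" using K mult_right_mono[of 1 "K+1" "\<bar>y - z\<bar>"] by simp
    finally show ?thesis .
  qed
  show ?thesis unfolding actb_def using K l by (auto simp: indicator_def)
qed

end

locale nnR = nnsetup d H e c a b f \<mu>
  for d H :: nat and e :: "nat \<Rightarrow> 'n::finite" and c :: "nat \<Rightarrow> 'd::finite"
    and a b :: real and f :: "real^'d \<Rightarrow> real" and \<mu> :: "(real^'d) measure" +
  fixes R :: "nat \<Rightarrow> real \<Rightarrow> real"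
  assumes R_C1: "\<forall>r\<ge>1. R r C1_differentiable_on UNIV"
    and R_bdd: "\<forall>x. bdd_above {\<bar>R r y\<bar> + \<bar>deriv (R r) y\<bar> | r y. r \<ge> 1 \<and> y \<in> {-\<bar>x\<bar>..\<bar>x\<bar>}}"
    and R_lim: "\<forall>x. limsup (\<lambda>r. ereal (\<bar>R r x - max x 0\<bar> + \<bar>deriv (R r) x - indicator {0<..} x\<bar>)) = 0"
begin

lemma R_der: assumes "r \<ge> 1" shows "(R r has_real_derivative deriv (R r) y) (at y)"
  and "continuous_on UNIV (deriv (R r))"
proof -
  obtain D where D: "\<And>x. (R r has_vector_derivative D x) (at x)" "continuous_on UNIV D"
    using R_C1 assms unfolding C1_differentiable_on_def by blast
  have Dr: "(R r has_real_derivative D x) (at x)" for x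
    using D(1) by (simp add: has_real_derivative_iff_has_vector_derivative)
  then have "deriv (R r) = D" by (intro ext DERIV_imp_deriv)
  then show "(R r has_real_derivative deriv (R r) y) (at y)" "continuous_on UNIV (deriv (R r))"
    using Dr D(2) by auto
qed

lemma R_cont: "r \<ge> 1 \<Longrightarrow> continuous_on UNIV (R r)"
  using R_der(1) by (intro continuous_at_imp_continuous_on) (auto intro: DERIV_isCont)

lemma R_meas: "r \<ge> 1 \<Longrightarrow> R r \<in> borel_measurable borel"
  using R_cont borel_measurable_continuous_onI by blast

lemma Rd_meas: "r \<ge> 1 \<Longrightarrow> deriv (R r) \<in> borel_measurable borel"
  using R_der(2) borel_measurable_continuous_onI by blast

lemma R_actb: assumes "K \<ge> 0" shows "\<exists>B. \<forall>r\<ge>1. actb (R r) (deriv (R r)) K B"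
proof -
  obtain B where B: "\<And>s. s \<in> {\<bar>R r y\<bar> + \<bar>deriv (R r) y\<bar> | r y. r \<ge> 1 \<and> y \<in> {-\<bar>K\<bar>..\<bar>K\<bar>}} \<Longrightarrow> s \<le> B"
    using R_bdd unfolding bdd_above_def by blast
  have b: "\<bar>R r y\<bar> + \<bar>deriv (R r) y\<bar> \<le> B" if "r \<ge> 1" "\<bar>y\<bar> \<le> K" for r y
  proof (rule B)
    show "\<bar>R r y\<bar> + \<bar>deriv (R r) y\<bar> \<in> {\<bar>R r y\<bar> + \<bar>deriv (R r) y\<bar> | r y. r \<ge> 1 \<and> y \<in> {-\<bar>K\<bar>..\<bar>K\<bar>}}"
      unfolding mem_Collect_eq by (rule exI[of _ r], rule exI[of _ y]) (use that assms in auto)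
  qed
  have lip: "\<bar>R r y - R r z\<bar> \<le> B * \<bar>y - z\<bar>" if r: "r \<ge> 1" and y: "\<bar>y\<bar> \<le> K" and z: "\<bar>z\<bar> \<le> K" and yz: "y < z" for r y z
  proof -
    obtain w where w: "y < w" "w < z" "R r z - R r y = (z - y) * deriv (R r) w"
      using MVT2[OF yz, of "R r" "deriv (R r)"] R_der(1)[OF r] by blast
    have wK: "\<bar>w\<bar> \<le> K" using w(1,2) y z by (auto simp: abs_le_iff)
    have "\<bar>deriv (R r) w\<bar> \<le> B" using b[OF r wK] abs_ge_zero[of "R r w"] by linarith
    then have "\<bar>R r z - R r y\<bar> \<le> \<bar>z - y\<bar> * B" unfolding w(3) abs_mult by (intro mult_left_mono) auto
    then show ?thesis by (simp add: abs_minus_commute mult.commute)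
  qed
  have "actb (R r) (deriv (R r)) K B" if r: "r \<ge> 1" for r
    unfolding actb_def
  proof (intro conjI allI impI)
    fix y assume "\<bar>y\<bar> \<le> K"
    then show "\<bar>R r y\<bar> \<le> B" "\<bar>deriv (R r) y\<bar> \<le> B" using b[OF r] by (smt (verit))+
  next
    fix y z assume y: "\<bar>y\<bar> \<le> K" and z: "\<bar>z\<bar> \<le> K"
    consider "y < z" | "y = z" | "z < y" by linarith
    then show "\<bar>R r y - R r z\<bar> \<le> B * \<bar>y - z\<bar>"
    proof cases
      case 1 then show ?thesis using lip[OF r y z] by simp
    next
      case 2 then show ?thesis by simp
    next
      case 3 then show ?thesis using lip[OF r z y] by (simp add: abs_minus_commute)
    qed
  qed
  then show ?thesis by blast
qed

lemma R_conv: "(\<lambda>r. R r y) \<longlonglongrightarrow> max y 0" "(\<lambda>r. deriv (R r) y) \<longlonglongrightarrow> indicator {0<..} y"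
proof -
  define s where "s r = \<bar>R r y - max y 0\<bar> + \<bar>deriv (R r) y - indicator {0<..} y\<bar>" for r
  have ls: "limsup (\<lambda>r. ereal (s r)) = 0" using R_lim unfolding s_def by blast
  have li: "liminf (\<lambda>r. ereal (s r)) \<ge> 0"
    by (rule Liminf_bounded) (auto simp: s_def)
  have "liminf (\<lambda>r. ereal (s r)) \<le> limsup (\<lambda>r. ereal (s r))" by (rule Liminf_le_Limsup) simp
  then have "liminf (\<lambda>r. ereal (s r)) = 0" using li ls by simp
  then have "(\<lambda>r. ereal (s r)) \<longlonglongrightarrow> ereal 0" using ls
    by (subst tendsto_iff_Liminf_eq_Limsup) (auto simp: zero_ereal_def)
  then have s0: "s \<longlonglongrightarrow> 0" by (simp only: lim_ereal)
  have "(\<lambda>r. \<bar>R r y - max y 0\<bar>) \<longlonglongrightarrow> 0"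
    by (rule tendsto_sandwich[OF _ _ tendsto_const s0]) (auto simp: s_def)
  then show "(\<lambda>r. R r y) \<longlonglongrightarrow> max y 0"
    by (simp add: LIM_zero_iff tendsto_rabs_zero_iff)
  have "(\<lambda>r. \<bar>deriv (R r) y - indicator {0<..} y\<bar>) \<longlonglongrightarrow> 0"
    by (rule tendsto_sandwich[OF _ _ tendsto_const s0]) (auto simp: s_def)
  then show "(\<lambda>r. deriv (R r) y) \<longlonglongrightarrow> indicator {0<..} y"
    by (simp add: LIM_zero_iff tendsto_rabs_zero_iff)
qed

end

lemma vec_nth_meas: "g \<in> borel_measurable M \<Longrightarrow> (\<lambda>x. g x $ k) \<in> borel_measurable M"
  for g :: "'a \<Rightarrow> real^'n"
proof -
  assume g: "g \<in> borel_measurable M"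
  have "(\<lambda>v::real^'n. v $ k) \<in> borel_measurable borel"
    by (rule borel_measurable_continuous_onI) (intro continuous_intros)
  from measurable_compose[OF g this] show ?thesis .
qed

lemma int_norm_le:
  fixes g :: "'a \<Rightarrow> 'b::{banach, second_countable_topology}"
  assumes "finite_measure M" "integrable M g" "\<And>x. x \<in> space M \<Longrightarrow> norm (g x) \<le> C"
  shows "norm (\<integral>x. g x \<partial>M) \<le> C * measure M (space M)"
proof -
  have "norm (\<integral>x. g x \<partial>M) \<le> (\<integral>x. norm (g x) \<partial>M)" by (rule integral_norm_bound)
  also have "\<dots> \<le> (\<integral>x. C \<partial>M)"
    using assms by (intro integral_mono) (auto intro: finite_measure.integrable_const)
  also have "\<dots> = C * measure M (space M)" by simp
  finally show ?thesis .
qed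

context nnR
begin

abbreviation relu :: "real \<Rightarrow> real" where "relu \<equiv> \<lambda>y. max y 0"
abbreviation ind :: "real \<Rightarrow> real" where "ind \<equiv> indicator {0<..}"

definition "Lr r \<theta> = (\<integral>x. Fl (R r) \<theta> x \<partial>\<mu>)"
definition "Gr r \<theta> = (\<integral>x. gv (R r) (deriv (R r)) \<theta> x \<partial>\<mu>)"
definition "Li \<theta> = (\<integral>x. Fl relu \<theta> x \<partial>\<mu>)"
definition "G0 \<theta> = (\<integral>x. gv relu ind \<theta> x \<partial>\<mu>)"
definition "MU = measure \<mu> (space \<mu>)"

lemma relu_meas: "relu \<in> borel_measurable borel" by measurable
lemma ind_meas: "ind \<in> borel_measurable borel" by measurable

lemma BR: "\<rho> \<ge> 0 \<Longrightarrow> \<exists>B. \<forall>r\<ge>1. actb (R r) (deriv (R r)) (Kof \<rho>) B"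
  using R_actb Kof_nonneg by blast

lemma Lr_deriv: assumes r: "r \<ge> 1" shows "(Lr r has_derivative (\<lambda>h. Gr r \<theta> \<bullet> h)) (at \<theta>)"
proof -
  have A: "\<exists>B. actb (R r) (deriv (R r)) (Kof \<rho>) B" if "\<rho> \<ge> 0" for \<rho>
    using BR[OF that] r by blast
  show ?thesis
  unfolding Lr_def[abs_def] Gr_def
  by (rule Fl_has_derivative_integral[OF R_meas[OF r] Rd_meas[OF r] A]) (auto intro!: AE_I2 R_der r)
qed

lemma gv_R_integrable: "r \<ge> 1 \<Longrightarrow> integrable \<mu> (\<lambda>x. gv (R r) (deriv (R r)) \<theta> x)"
  using BR[of "norm \<theta>"] gv_integrable[OF R_meas Rd_meas] by fastforce

lemma gv_relu_integrable: "integrable \<mu> (\<lambda>x. gv relu ind \<theta> x)"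
  using relu_actb[OF Kof_nonneg[of "norm \<theta>"]] gv_integrable[OF relu_meas ind_meas] by fastforce

lemma Fl_R_integrable: "r \<ge> 1 \<Longrightarrow> integrable \<mu> (\<lambda>x. Fl (R r) \<theta> x)"
  using BR[of "norm \<theta>"] Fl_integrable[OF R_meas] by fastforce

lemma Fl_relu_integrable: "integrable \<mu> (\<lambda>x. Fl relu \<theta> x)"
  using relu_actb[OF Kof_nonneg[of "norm \<theta>"]] Fl_integrable[OF relu_meas] by fastforce

lemma Gr_nth: "r \<ge> 1 \<Longrightarrow> Gr r \<theta> $ k = (\<integral>x. gv (R r) (deriv (R r)) \<theta> x $ k \<partial>\<mu>)"
  unfolding Gr_def by (rule vec_integral_nth[OF gv_R_integrable])

lemma G0_nth: "G0 \<theta> $ k = (\<integral>x. gv relu ind \<theta> x $ k \<partial>\<mu>)"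
  unfolding G0_def by (rule vec_integral_nth[OF gv_relu_integrable])

lemma Gr_bound: assumes "\<rho> \<ge> 0" shows "\<exists>C. \<forall>r\<ge>1. \<forall>\<theta>. norm \<theta> \<le> \<rho> \<longrightarrow> norm (Gr r \<theta>) \<le> C"
proof -
  obtain B where B: "\<And>r. r \<ge> 1 \<Longrightarrow> actb (R r) (deriv (R r)) (Kof \<rho>) B" using BR[OF assms] by blast
  have "norm (Gr r \<theta>) \<le> real CARD('n) * (2 * Ob \<rho> B * Lc \<rho> B) * MU" if "r \<ge> 1" "norm \<theta> \<le> \<rho>" for r \<theta>
    unfolding Gr_def MU_def
    by (rule int_norm_le[OF mu_fin gv_R_integrable[OF that(1)]])
       (use gv_norm_bound[OF _ that(2) B[OF that(1)]] in \<open>simp add: space_mu\<close>)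
  then show ?thesis by blast
qed

lemma G0_bound: assumes "\<rho> \<ge> 0" shows "\<exists>C. \<forall>\<theta>. norm \<theta> \<le> \<rho> \<longrightarrow> norm (G0 \<theta>) \<le> C"
proof -
  have B: "actb relu ind (Kof \<rho>) (Kof \<rho> + 1)" by (rule relu_actb[OF Kof_nonneg[OF assms]])
  have "norm (G0 \<theta>) \<le> real CARD('n) * (2 * Ob \<rho> (Kof \<rho> + 1) * Lc \<rho> (Kof \<rho> + 1)) * MU" if "norm \<theta> \<le> \<rho>" for \<theta>
    unfolding G0_def MU_def
    by (rule int_norm_le[OF mu_fin gv_relu_integrable])
       (use gv_norm_bound[OF _ that B] in \<open>simp add: space_mu\<close>)
  then show ?thesis by blast
qed

lemma Lr_conv: "(\<lambda>r. Lr r \<theta>) \<longlonglongrightarrow> Li \<theta>"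
proof -
  obtain B where B: "\<And>r. r \<ge> 1 \<Longrightarrow> actb (R r) (deriv (R r)) (Kof (norm \<theta>)) B" using BR[of "norm \<theta>"] by auto
  have "(\<lambda>r. \<integral>x. Fl (R (Suc r)) \<theta> x \<partial>\<mu>) \<longlonglongrightarrow> (\<integral>x. Fl relu \<theta> x \<partial>\<mu>)"
  proof (rule integral_dominated_convergence[where w="\<lambda>_. (Ob (norm \<theta>) B)\<^sup>2"])
    show "(\<lambda>x. Fl relu \<theta> x) \<in> borel_measurable \<mu>" by (rule Fl_meas[OF relu_meas])
    show "(\<lambda>x. Fl (R (Suc r)) \<theta> x) \<in> borel_measurable \<mu>" for r by (rule Fl_meas[OF R_meas]) simp
    show "integrable \<mu> (\<lambda>_. (Ob (norm \<theta>) B)\<^sup>2)" using mu_fin finite_measure.integrable_const by blast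
    show "AE x in \<mu>. (\<lambda>r. Fl (R (Suc r)) \<theta> x) \<longlonglongrightarrow> Fl relu \<theta> x"
    proof (rule AE_I2)
      fix x
      have "(\<lambda>r. R (Suc r) y) \<longlonglongrightarrow> max y 0" for y using R_conv(1)[of y] by (rule LIMSEQ_Suc)
      then show "(\<lambda>r. Fl (R (Suc r)) \<theta> x) \<longlonglongrightarrow> Fl relu \<theta> x"
        unfolding Fl_def outp_def by (intro tendsto_intros)
    qed
    show "AE x in \<mu>. norm (Fl (R (Suc r)) \<theta> x) \<le> (Ob (norm \<theta>) B)\<^sup>2" for r
      using Fl_bound[OF _ order_refl B[of "Suc r"]] by (auto intro!: AE_I2 simp: space_mu)
  qed
  then have "(\<lambda>r. Lr (Suc r) \<theta>) \<longlonglongrightarrow> Li \<theta>" unfolding Lr_def Li_def .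
  then show ?thesis by (rule LIMSEQ_imp_Suc)
qed

lemma Gr_conv: "(\<lambda>r. Gr r \<theta>) \<longlonglongrightarrow> G0 \<theta>"
proof -
  obtain B where B: "\<And>r. r \<ge> 1 \<Longrightarrow> actb (R r) (deriv (R r)) (Kof (norm \<theta>)) B" using BR[of "norm \<theta>"] by auto
  have "(\<lambda>r. Gr (Suc r) \<theta>) \<longlonglongrightarrow> G0 \<theta>"
  proof (rule vec_tendstoI)
    fix k
    have "(\<lambda>r. \<integral>x. gv (R (Suc r)) (deriv (R (Suc r))) \<theta> x $ k \<partial>\<mu>) \<longlonglongrightarrow> (\<integral>x. gv relu ind \<theta> x $ k \<partial>\<mu>)"
    proof (rule integral_dominated_convergence[where w="\<lambda>_. 2 * Ob (norm \<theta>) B * Lc (norm \<theta>) B"])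
      show "(\<lambda>x. gv relu ind \<theta> x $ k) \<in> borel_measurable \<mu>"
        using gv_meas[OF relu_meas ind_meas] by (rule vec_nth_meas)
      show "(\<lambda>x. gv (R (Suc r)) (deriv (R (Suc r))) \<theta> x $ k) \<in> borel_measurable \<mu>" for r
        using gv_meas[OF R_meas Rd_meas, of "Suc r"] by (intro vec_nth_meas) simp
      show "integrable \<mu> (\<lambda>_. 2 * Ob (norm \<theta>) B * Lc (norm \<theta>) B)" using mu_fin finite_measure.integrable_const by blast
      show "AE x in \<mu>. (\<lambda>r. gv (R (Suc r)) (deriv (R (Suc r))) \<theta> x $ k) \<longlonglongrightarrow> gv relu ind \<theta> x $ k"
      proof (rule AE_I2)
        fix x
        have 1: "(\<lambda>r. R (Suc r) y) \<longlonglongrightarrow> max y 0" for y using R_conv(1)[of y] by (rule LIMSEQ_Suc)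
        have 2: "(\<lambda>r. deriv (R (Suc r)) y) \<longlonglongrightarrow> ind y" for y using R_conv(2)[of y] by (rule LIMSEQ_Suc)
        show "(\<lambda>r. gv (R (Suc r)) (deriv (R (Suc r))) \<theta> x $ k) \<longlonglongrightarrow> gv relu ind \<theta> x $ k"
          unfolding gv_def Dout_def outp_def vec_lambda_beta by (intro tendsto_intros 1 2)
      qed
      show "AE x in \<mu>. norm (gv (R (Suc r)) (deriv (R (Suc r))) \<theta> x $ k) \<le> 2 * Ob (norm \<theta>) B * Lc (norm \<theta>) B" for r
        using gv_comp_bound[OF _ order_refl B[of "Suc r"]] by (auto intro!: AE_I2 simp: space_mu)
    qed
    then show "(\<lambda>r. Gr (Suc r) \<theta> $ k) \<longlonglongrightarrow> G0 \<theta> $ k"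
      by (simp add: Gr_nth G0_nth)
  qed
  then show ?thesis by (rule LIMSEQ_imp_Suc)
qed

end

lemma isCont_vecI:
  fixes F :: "'a::t2_space \<Rightarrow> real^'n"
  assumes "\<And>k. isCont (\<lambda>\<theta>. F \<theta> $ k) \<theta>0"
  shows "isCont F \<theta>0"
  using assms unfolding continuous_at by (intro vec_tendstoI) auto

context nnsetup
begin

lemma sig_inn_cont: "continuous_on UNIV \<sigma> \<Longrightarrow> isCont (\<lambda>\<theta>. \<sigma> (inn \<theta> x i)) \<theta>0"
  by (rule isCont_o2[OF _ continuous_on_interior[of UNIV]])
     (use inn_cont[of x i] in \<open>auto simp: continuous_on_eq_continuous_at\<close>)

lemma outp_cont: "continuous_on UNIV \<sigma> \<Longrightarrow> isCont (\<lambda>\<theta>. outp \<sigma> \<theta> x) \<theta>0"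
  unfolding outp_def by (intro sig_inn_cont continuous_intros)

lemma Dout_cont:
  assumes "continuous_on UNIV \<sigma>" and "\<And>i. i \<in> {1..H} \<Longrightarrow> isCont (\<lambda>\<theta>. \<sigma>' (inn \<theta> x i) * inn h x i) \<theta>0"
  shows "isCont (\<lambda>\<theta>. Dout \<sigma> \<sigma>' \<theta> x h) \<theta>0"
  unfolding Dout_def by (intro assms(2) sig_inn_cont[OF assms(1)] continuous_intros) auto

lemma gv_cont:
  assumes "continuous_on UNIV \<sigma>" and "\<And>i. i \<in> {1..H} \<Longrightarrow> isCont (\<lambda>\<theta>. \<sigma>' (inn \<theta> x i) * inn (axis k 1) x i) \<theta>0"
  shows "isCont (\<lambda>\<theta>. gv \<sigma> \<sigma>' \<theta> x $ k) \<theta>0"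
  unfolding gv_def vec_lambda_beta
  by (intro Dout_cont outp_cont assms continuous_intros)

lemma Fl_cont: "continuous_on UNIV \<sigma> \<Longrightarrow> isCont (\<lambda>\<theta>. Fl \<sigma> \<theta> x) \<theta>0"
  unfolding Fl_def by (intro outp_cont continuous_intros)

lemma ind_cont: "y \<noteq> 0 \<Longrightarrow> isCont (indicator {0<..} :: real \<Rightarrow> real) y"
  by (simp add: isCont_indicator frontier_def interior_open)

lemma relu_cont: "continuous_on UNIV (\<lambda>y::real. max y 0)"
  by (intro continuous_intros)

lemma ind_inn_cont:
  assumes "inn \<theta>0 x i \<noteq> 0 \<or> inn h x i = 0"
  shows "isCont (\<lambda>\<theta>. indicator {0<..} (inn \<theta> x i) * inn h x i) \<theta>0"
  using assms
proof
  assume "inn \<theta>0 x i \<noteq> 0"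
  then have "isCont (\<lambda>\<theta>. (indicator {0<..} :: real \<Rightarrow> real) (inn \<theta> x i)) \<theta>0"
    by (intro isCont_o2[OF _ ind_cont]) (use inn_cont[of x i] in \<open>auto simp: continuous_on_eq_continuous_at\<close>)
  then show ?thesis by (intro continuous_intros)
qed simp

lemma inn_lin_sum:
  "\<exists>u. (\<forall>x. (\<Sum>j=1..d. \<theta>$e((i-1)*d+j) * x$c j) = u \<bullet> x) \<and> (\<forall>j\<in>{1..d}. u $ c j = \<theta>$e((i-1)*d+j))"
proof -
  define u where "u = (\<chi> k. \<theta>$e((i-1)*d + inv_into {1..d} c k))"
  have inj: "inj_on c {1..d}" using c_bij by (rule bij_betw_imp_inj_on)
  have uc: "u $ c j = \<theta>$e((i-1)*d+j)" if "j \<in> {1..d}" for j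
    unfolding u_def using inv_into_f_f[OF inj that] by simp
  have "u \<bullet> x = (\<Sum>j=1..d. \<theta>$e((i-1)*d+j) * x$c j)" for x
  proof -
    have "u \<bullet> x = (\<Sum>k\<in>UNIV. u $ k * x $ k)" by (simp add: inner_vec_def)
    also have "\<dots> = (\<Sum>j=1..d. u $ c j * x $ c j)"
      by (rule sum.reindex_bij_betw[OF c_bij, symmetric])
    also have "\<dots> = (\<Sum>j=1..d. \<theta>$e((i-1)*d+j) * x$c j)"
      by (rule sum.cong) (auto simp: uc)
    finally show ?thesis .
  qed
  then show ?thesis using uc by metis
qed

lemma inn_nonzero_AE:
  assumes nd: "\<theta>$e(H*d+i) \<noteq> 0 \<or> (\<exists>j\<in>{1..d}. \<theta>$e((i-1)*d+j) \<noteq> 0)"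
  shows "AE x in \<mu>. inn \<theta> x i \<noteq> 0"
proof -
  obtain u where u: "\<And>x. (\<Sum>j=1..d. \<theta>$e((i-1)*d+j) * x$c j) = u \<bullet> x"
     "\<And>j. j \<in> {1..d} \<Longrightarrow> u $ c j = \<theta>$e((i-1)*d+j)"
    using inn_lin_sum[of \<theta> i] by blast
  have innu: "inn \<theta> x i = \<theta>$e(H*d+i) + u \<bullet> x" for x unfolding inn_def u(1) ..
  define N where "N = {x. u \<bullet> x = - \<theta>$e(H*d+i)} \<inter> cube a b"
  have "u \<noteq> 0 \<or> - \<theta>$e(H*d+i) \<noteq> 0" using nd u(2) by auto
  then have "negligible {x. u \<bullet> x = - \<theta>$e(H*d+i)}" by (rule negligible_hyperplane)
  then have "negligible N" unfolding N_def by (rule negligible_subset) auto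
  then have "N \<in> null_sets lebesgue" by (simp add: negligible_iff_null_sets)
  moreover have Ns: "N \<in> sets lborel"
    unfolding N_def cube_def by (intro sets.Int borel_closed closed_hyperplane closed_cbox) auto
  ultimately have "N \<in> null_sets lborel" by (simp add: null_sets_completion_iff)
  moreover have "cube a b \<in> sets lborel" unfolding cube_def by simp
  ultimately have "N \<in> null_sets (restrict_space lborel (cube a b))"
    by (subst null_sets_restrict_space) (auto simp: N_def)
  then have "N \<in> null_sets \<mu>" using mu_ac unfolding absolutely_continuous_def by blast
  then show ?thesis
    by (rule AE_I') (auto simp: space_mu N_def innu)
qed

end

context nnR
begin

lemma Gr_cont: assumes r: "r \<ge> 1" shows "continuous_on UNIV (Gr r)"
proof (intro continuous_at_imp_continuous_on ballI isCont_vecI)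
  fix \<theta>0 :: "real^'n" and k
  define \<rho> where "\<rho> = norm \<theta>0 + 1"
  obtain B where B: "actb (R r) (deriv (R r)) (Kof \<rho>) B" using BR[of \<rho>] r unfolding \<rho>_def by auto
  have "isCont (\<lambda>\<theta>. \<integral>x. gv (R r) (deriv (R r)) \<theta> x $ k \<partial>\<mu>) \<theta>0"
  proof (rule integral_cont_at[where \<rho>=1 and C="2 * Ob \<rho> B * Lc \<rho> B"])
    show "finite_measure \<mu>" by (rule mu_fin)
    show "(\<lambda>x. gv (R r) (deriv (R r)) \<theta> x $ k) \<in> borel_measurable \<mu>" for \<theta>
      using gv_meas[OF R_meas[OF r] Rd_meas[OF r]] by (rule vec_nth_meas)
    show "AE x in \<mu>. isCont (\<lambda>\<theta>. gv (R r) (deriv (R r)) \<theta> x $ k) \<theta>0"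
      by (intro AE_I2 gv_cont R_cont[OF r] continuous_intros sig_inn_cont R_der(2)[OF r])
    show "\<bar>gv (R r) (deriv (R r)) \<theta> x $ k\<bar> \<le> 2 * Ob \<rho> B * Lc \<rho> B" if "dist \<theta> \<theta>0 < 1" "x \<in> space \<mu>" for \<theta> x
    proof -
      have "norm \<theta> \<le> \<rho>" using that norm_triangle_ineq2[of \<theta> \<theta>0] unfolding \<rho>_def dist_norm by linarith
      then show ?thesis using gv_comp_bound[OF _ _ B] that by (simp add: space_mu)
    qed
  qed simp
  then show "isCont (\<lambda>\<theta>. Gr r \<theta> $ k) \<theta>0" by (simp add: Gr_nth[OF r])
qed

lemma Li_cont: "continuous_on UNIV Li"
proof (intro continuous_at_imp_continuous_on ballI)
  fix \<theta>0 :: "real^'n"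
  define \<rho> where "\<rho> = norm \<theta>0 + 1"
  have B: "actb relu ind (Kof \<rho>) (Kof \<rho> + 1)" by (rule relu_actb[OF Kof_nonneg]) (simp add: \<rho>_def)
  show "isCont Li \<theta>0" unfolding Li_def[abs_def]
  proof (rule integral_cont_at[where \<rho>=1 and C="(Ob \<rho> (Kof \<rho> + 1))\<^sup>2"])
    show "finite_measure \<mu>" by (rule mu_fin)
    show "(\<lambda>x. Fl relu \<theta> x) \<in> borel_measurable \<mu>" for \<theta> by (rule Fl_meas[OF relu_meas])
    show "AE x in \<mu>. isCont (\<lambda>\<theta>. Fl relu \<theta> x) \<theta>0"
      by (intro AE_I2 Fl_cont relu_cont)
    show "\<bar>Fl relu \<theta> x\<bar> \<le> (Ob \<rho> (Kof \<rho> + 1))\<^sup>2" if "dist \<theta> \<theta>0 < 1" "x \<in> space \<mu>" for \<theta> x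
    proof -
      have "norm \<theta> \<le> \<rho>" using that norm_triangle_ineq2[of \<theta> \<theta>0] unfolding \<rho>_def dist_norm by linarith
      then show ?thesis using Fl_bound[OF _ _ B] that by (simp add: space_mu)
    qed
  qed simp
qed

lemma G0_comp_cont:
  assumes P: "AE x in \<mu>. \<forall>i\<in>{1..H}. inn \<theta>0 x i \<noteq> 0 \<or> inn (axis k 1) x i = 0"
  shows "isCont (\<lambda>\<theta>. G0 \<theta> $ k) \<theta>0"
proof -
  define \<rho> where "\<rho> = norm \<theta>0 + 1"
  have B: "actb relu ind (Kof \<rho>) (Kof \<rho> + 1)" by (rule relu_actb[OF Kof_nonneg]) (simp add: \<rho>_def)
  have "isCont (\<lambda>\<theta>. \<integral>x. gv relu ind \<theta> x $ k \<partial>\<mu>) \<theta>0"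
  proof (rule integral_cont_at[where \<rho>=1 and C="2 * Ob \<rho> (Kof \<rho> + 1) * Lc \<rho> (Kof \<rho> + 1)"])
    show "finite_measure \<mu>" by (rule mu_fin)
    show "(\<lambda>x. gv relu ind \<theta> x $ k) \<in> borel_measurable \<mu>" for \<theta>
      using gv_meas[OF relu_meas ind_meas] by (rule vec_nth_meas)
    show "AE x in \<mu>. isCont (\<lambda>\<theta>. gv relu ind \<theta> x $ k) \<theta>0"
      using P by eventually_elim (intro gv_cont relu_cont ind_inn_cont, auto)
    show "\<bar>gv relu ind \<theta> x $ k\<bar> \<le> 2 * Ob \<rho> (Kof \<rho> + 1) * Lc \<rho> (Kof \<rho> + 1)" if "dist \<theta> \<theta>0 < 1" "x \<in> space \<mu>" for \<theta> x
    proof -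
      have "norm \<theta> \<le> \<rho>" using that norm_triangle_ineq2[of \<theta> \<theta>0] unfolding \<rho>_def dist_norm by linarith
      then show ?thesis using gv_comp_bound[OF _ _ B] that by (simp add: space_mu)
    qed
  qed simp
  then show ?thesis by (simp add: G0_nth)
qed

end

context nnsetup
begin

definition nd :: "real^'n \<Rightarrow> nat \<Rightarrow> bool" where
  "nd \<theta> i \<longleftrightarrow> \<theta>$e(H*d+i) \<noteq> 0 \<or> (\<exists>j\<in>{1..d}. \<theta>$e((i-1)*d+j) \<noteq> 0)"

definition Idx :: "nat \<Rightarrow> nat set" where
  "Idx i = (\<lambda>j. (i-1)*d+j) ` {1..d} \<union> {H*d+i}"

lemma e_inj: "inj_on e {1..d*H + 2*H + 1}"
  using e_bij by (rule bij_betw_imp_inj_on)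

lemma Idx_le: "i \<in> {1..H} \<Longrightarrow> m \<in> Idx i \<Longrightarrow> 1 \<le> m \<and> m \<le> H*d + H"
proof -
  assume i: "i \<in> {1..H}" and m: "m \<in> Idx i"
  show ?thesis
  proof (cases "m = H*d+i")
    case True then show ?thesis using i by auto
  next
    case False
    then obtain j where j: "j \<in> {1..d}" "m = (i-1)*d+j" using m False unfolding Idx_def by blast
    have "(i-1)*d + j \<le> (i-1)*d + d" using j by simp
    also have "\<dots> = i * d" using i by (cases i) auto
    also have "\<dots> \<le> H * d" using i by simp
    finally show ?thesis using j by simp
  qed
qed

lemma Idx_disj:
  assumes i: "i \<in> {1..H}" and i': "i' \<in> {1..H}" and ne: "i \<noteq> i'" and m: "m \<in> Idx i"
  shows "m \<notin> Idx i'"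
proof
  assume m': "m \<in> Idx i'"
  have wb: "(i-1)*d+j \<noteq> H*d+i''" if "j \<in> {1..d}" "i'' \<in> {1..H}" "i''' \<in> {1..H}" for j i'' i'''
  proof -
    have "(i-1)*d+j \<le> H*d" if "i \<in> {1..H}" for i
    proof -
      have "(i-1)*d + j \<le> (i-1)*d + d" using \<open>j \<in> {1..d}\<close> by simp
      also have "\<dots> = i * d" using that by (cases i) auto
      also have "\<dots> \<le> H * d" using that by simp
      finally show ?thesis .
    qed
    then show ?thesis using that i by fastforce
  qed
  have ww: "i = i'" if "j \<in> {1..d}" "j' \<in> {1..d}" "(i-1)*d+j = (i'-1)*d+j'" for j j'
  proof (rule ccontr)
    assume "i \<noteq> i'"
    then consider "i < i'" | "i' < i" by linarith
    then show False
    proof cases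
      case 1
      have "(i-1)*d+j \<le> (i-1)*d + d" using that by simp
      also have "\<dots> = i*d" using i by (cases i) auto
      also have "\<dots> \<le> (i'-1)*d" using 1 by (intro mult_le_mono1) linarith
      also have "\<dots> < (i'-1)*d+j'" using that by simp
      finally show False using that by simp
    next
      case 2
      have "(i'-1)*d+j' \<le> (i'-1)*d + d" using that by simp
      also have "\<dots> = i'*d" using i' by (cases i') auto
      also have "\<dots> \<le> (i-1)*d" using 2 by (intro mult_le_mono1) linarith
      also have "\<dots> < (i-1)*d+j" using that by simp
      finally show False using that by simp
    qed
  qed
  show False
  proof (cases "m = H*d+i")
    case True
    show False
    proof (cases "m = H*d+i'")
      case True then show False using \<open>m = H*d+i\<close> ne by simp
    next
      case False
      then obtain j' where "j' \<in> {1..d}" "m = (i'-1)*d+j'" using m' False unfolding Idx_def by blast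
      have "(i'-1)*d+j' \<le> H*d"
      proof -
        have "(i'-1)*d + j' \<le> (i'-1)*d + d" using \<open>j' \<in> {1..d}\<close> by simp
        also have "\<dots> = i' * d" using i' by (cases i') auto
        also have "\<dots> \<le> H * d" using i' by simp
        finally show ?thesis .
      qed
      then show False using \<open>m = (i'-1)*d+j'\<close> \<open>m = H*d+i\<close> i by simp
    qed
  next
    case False
    then obtain j where j: "j \<in> {1..d}" "m = (i-1)*d+j" using m False unfolding Idx_def by blast
    have le: "(i-1)*d+j \<le> H*d"
    proof -
      have "(i-1)*d + j \<le> (i-1)*d + d" using j by simp
      also have "\<dots> = i * d" using i by (cases i) auto
      also have "\<dots> \<le> H * d" using i by simp
      finally show ?thesis .
    qed
    show False
    proof (cases "m = H*d+i'")
      case True then show False using le j i' by simp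
    next
      case False
      then obtain j' where "j' \<in> {1..d}" "m = (i'-1)*d+j'" using m' False unfolding Idx_def by blast
      then show False using ww[OF j(1) \<open>j' \<in> {1..d}\<close>] j ne by simp
    qed
  qed
qed

lemma axis_e_zero:
  assumes "m \<in> {1..d*H + 2*H + 1}" "m' \<in> {1..d*H + 2*H + 1}" "m \<noteq> m'"
  shows "axis (e m) (1::real) $ e m' = 0"
proof -
  have "e m \<noteq> e m'" using e_inj assms unfolding inj_on_def by blast
  then show ?thesis by (simp add: axis_def)
qed

lemma inn_axis_zero: "k \<notin> e ` Idx i \<Longrightarrow> inn (axis k 1) x i = 0"
  unfolding inn_def Idx_def by (auto simp: axis_def intro!: sum.neutral)

lemma not_nd_inn: "\<not> nd \<theta> i \<Longrightarrow> inn \<theta> x i = 0"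
  unfolding nd_def inn_def by auto

lemma Dout_bad:
  assumes i: "i \<in> {1..H}" and m: "m \<in> Idx i" and deg: "\<not> nd \<theta> i"
  shows "Dout (\<lambda>y. max y 0) (indicator {0<..}) \<theta> x (axis (e m) 1) = 0"
proof -
  have Il: "1 \<le> m" "m \<le> H*d + H" using Idx_le[OF i m] by auto
  have mr: "m \<in> {1..d*H + 2*H + 1}" using Il by (simp add: mult.commute)
  have mle: "m \<le> H*d + H" by (rule Il(2))
  have 1: "axis (e m) (1::real) $ e (d*H+2*H+1) = 0"
    using mle by (intro axis_e_zero mr) auto
  have 2: "axis (e m) (1::real) $ e (H*(d+1)+i') = 0" if "i' \<in> {1..H}" for i'
    using mle that by (intro axis_e_zero mr) (auto simp: algebra_simps)
  have 3: "\<theta>$e(H*(d+1)+i') * (indicator {0<..} (inn \<theta> x i') * inn (axis (e m) 1) x i') = 0"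
    if "i' \<in> {1..H}" for i'
  proof (cases "i' = i")
    case True then show ?thesis using not_nd_inn[OF deg] by simp
  next
    case False
    have "e m \<notin> e ` Idx i'"
    proof
      assume "e m \<in> e ` Idx i'"
      then obtain m' where m': "m' \<in> Idx i'" "e m = e m'" by auto
      have "m' \<in> {1..d*H + 2*H + 1}" using Idx_le[OF that m'(1)] by (simp add: mult.commute)
      then have "m = m'" using e_inj mr m'(2) unfolding inj_on_def by blast
      then show False using Idx_disj[OF i that _ m] False m'(1) by auto
    qed
    then show ?thesis using inn_axis_zero by simp
  qed
  show ?thesis unfolding Dout_def using 1 2 3 by (simp add: sum.neutral)
qed

lemma open_U: "open {\<theta>::real^'n. \<forall>i\<in>{1..H}. nd \<theta> i}"
proof -
  have o: "open {\<theta>::real^'n. \<theta>$k \<noteq> 0}" for k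
    by (rule open_Collect_neq) (intro continuous_intros)+
  have "{\<theta>::real^'n. \<forall>i\<in>{1..H}. nd \<theta> i} =
      (\<Inter>i\<in>{1..H}. {\<theta>. \<theta>$e(H*d+i) \<noteq> 0} \<union> (\<Union>j\<in>{1..d}. {\<theta>. \<theta>$e((i-1)*d+j) \<noteq> 0}))"
    unfolding nd_def by auto
  also have "open \<dots>" using o by (intro open_INT open_Un open_UN) auto
  finally show ?thesis .
qed

lemma null_U: "- {\<theta>::real^'n. \<forall>i\<in>{1..H}. nd \<theta> i} \<in> null_sets lborel"
proof -
  let ?U = "{\<theta>::real^'n. \<forall>i\<in>{1..H}. nd \<theta> i}"
  have sub: "- ?U \<subseteq> \<Union>((\<lambda>i. {\<theta>. axis (e(H*d+i)) 1 \<bullet> \<theta> = 0}) ` {1..H})"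
    unfolding nd_def by (auto simp: inner_axis')
  have "negligible (\<Union>((\<lambda>i. {\<theta>::real^'n. axis (e(H*d+i)) 1 \<bullet> \<theta> = 0}) ` {1..H}))"
    by (intro negligible_Union) (auto intro!: negligible_hyperplane simp: axis_eq_0_iff)
  then have "negligible (- ?U)" using sub by (rule negligible_subset)
  then have "- ?U \<in> null_sets lebesgue" by (simp add: negligible_iff_null_sets)
  moreover have "- ?U \<in> sets lborel"
  proof -
    have c: "closed (- ?U)" using open_U by (simp add: closed_def)
    show ?thesis using borel_closed[OF c] by simp
  qed
  ultimately show ?thesis by (simp add: null_sets_completion_iff)
qed

end

context nnR
begin

lemma G0_bad:
  assumes i: "i \<in> {1..H}" and m: "m \<in> Idx i" and deg: "\<not> nd \<theta> i"
  shows "G0 \<theta> $ e m = 0"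
  unfolding G0_nth gv_def using Dout_bad[OF assms] by simp

lemma G0_good_cont:
  assumes "\<forall>i\<in>{1..H}. \<not> nd \<theta>0 i \<longrightarrow> k \<notin> e ` Idx i"
  shows "isCont (\<lambda>\<theta>. G0 \<theta> $ k) \<theta>0"
proof (rule G0_comp_cont)
  have "\<forall>i\<in>{1..H}. AE x in \<mu>. inn \<theta>0 x i \<noteq> 0 \<or> inn (axis k 1) x i = 0"
  proof
    fix i assume i: "i \<in> {1..H}"
    show "AE x in \<mu>. inn \<theta>0 x i \<noteq> 0 \<or> inn (axis k 1) x i = 0"
    proof (cases "nd \<theta>0 i")
      case True
      then have "AE x in \<mu>. inn \<theta>0 x i \<noteq> 0" by (intro inn_nonzero_AE) (simp add: nd_def)
      then show ?thesis by eventually_elim simp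
    next
      case False
      then show ?thesis using assms i inn_axis_zero by (auto intro!: AE_I2)
    qed
  qed
  then show "AE x in \<mu>. \<forall>i\<in>{1..H}. inn \<theta>0 x i \<noteq> 0 \<or> inn (axis k 1) x i = 0"
    by (subst AE_ball_countable) auto
qed

lemma norm_vec_sq: "norm (v::real^'n) = sqrt (\<Sum>k\<in>UNIV. (v$k)\<^sup>2)"
  by (simp add: norm_vec_def L2_set_def)

lemma G0_lsc: assumes "\<epsilon> > 0" shows "\<forall>\<^sub>F \<theta> in nhds \<theta>0. norm (G0 \<theta>0) - \<epsilon> < norm (G0 \<theta>)"
proof -
  define Gd where "Gd = {k. \<forall>i\<in>{1..H}. \<not> nd \<theta>0 i \<longrightarrow> k \<notin> e ` Idx i}"
  define \<phi> where "\<phi> \<theta> = sqrt (\<Sum>k\<in>Gd. (G0 \<theta> $ k)\<^sup>2)" for \<theta>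
  have le: "\<phi> \<theta> \<le> norm (G0 \<theta>)" for \<theta>
    unfolding \<phi>_def norm_vec_sq by (intro real_sqrt_le_mono sum_mono2) auto
  have bad0: "G0 \<theta>0 $ k = 0" if kG: "k \<notin> Gd" for k
  proof -
    obtain i where i: "i \<in> {1..H}" "\<not> nd \<theta>0 i" "k \<in> e ` Idx i" using kG unfolding Gd_def by blast
    then obtain m where "m \<in> Idx i" "k = e m" by auto
    then show ?thesis using G0_bad[OF i(1) _ i(2)] by simp
  qed
  have eq: "\<phi> \<theta>0 = norm (G0 \<theta>0)"
  proof -
    have "(\<Sum>k\<in>UNIV. (G0 \<theta>0 $ k)\<^sup>2) = (\<Sum>k\<in>Gd. (G0 \<theta>0 $ k)\<^sup>2)"
      by (rule sum.mono_neutral_right) (auto simp: bad0)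
    then show ?thesis unfolding \<phi>_def norm_vec_sq by simp
  qed
  have "isCont \<phi> \<theta>0"
    unfolding \<phi>_def by (intro continuous_intros G0_good_cont) (auto simp: Gd_def)
  then have "(\<phi> \<longlongrightarrow> \<phi> \<theta>0) (nhds \<theta>0)" by (simp add: isCont_def tendsto_at_iff_tendsto_nhds)
  then have "\<forall>\<^sub>F \<theta> in nhds \<theta>0. \<phi> \<theta>0 - \<epsilon> < \<phi> \<theta>" by (rule order_tendstoD(1)) (use assms in simp)
  then show ?thesis by eventually_elim (use le eq in \<open>smt (verit)\<close>)
qed

lemma relu_deriv: "y \<noteq> 0 \<Longrightarrow> ((\<lambda>y. max y 0) has_real_derivative indicator {0<..} y) (at y)"
proof -
  assume y: "y \<noteq> 0"
  show ?thesis
  proof (cases "y > 0")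
    case True
    have ev: "\<forall>\<^sub>F z in nhds y. max z 0 = z"
      using eventually_nhds_in_open[of "{0<..}" y] True by (auto elim!: eventually_mono)
    have "((\<lambda>z. z) has_real_derivative 1) (at y)" by (rule DERIV_ident)
    then show ?thesis using DERIV_cong_ev[OF refl ev, of 1 1] True by simp
  next
    case False
    then have yn: "y < 0" using y by simp
    have ev: "\<forall>\<^sub>F z in nhds y. max z 0 = 0"
      using eventually_nhds_in_open[of "{..<0}" y] yn by (auto elim!: eventually_mono)
    have "((\<lambda>z. 0::real) has_real_derivative 0) (at y)" by (rule DERIV_const)
    then show ?thesis using DERIV_cong_ev[OF refl ev, of 0 0] yn by simp
  qed
qed

lemma Li_deriv_U:
  assumes U: "\<forall>i\<in>{1..H}. nd \<theta>0 i"
  shows "(Li has_derivative (\<lambda>h. G0 \<theta>0 \<bullet> h)) (at \<theta>0)"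
proof -
  have "AE x in \<mu>. \<forall>i\<in>{1..H}. inn \<theta>0 x i \<noteq> 0"
    using U by (subst AE_ball_countable) (auto intro!: inn_nonzero_AE simp: nd_def)
  then have der: "AE x in \<mu>. \<forall>i\<in>{1..H}. ((\<lambda>y. max y 0) has_real_derivative indicator {0<..} (inn \<theta>0 x i)) (at (inn \<theta>0 x i))"
    by eventually_elim (auto intro: relu_deriv)
  show ?thesis unfolding Li_def[abs_def] G0_def
    by (rule Fl_has_derivative_integral[OF relu_meas ind_meas _ der]) (use relu_actb Kof_nonneg in blast)
qed

lemma G0_cont_U:
  assumes U: "\<forall>i\<in>{1..H}. nd \<theta>0 i"
  shows "isCont G0 \<theta>0"
  by (rule isCont_vecI, rule G0_good_cont) (use U in auto)

lemma G0_meas: "G0 \<in> borel_measurable borel"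
proof (rule borel_measurable_LIMSEQ_metric)
  show "Gr (Suc r) \<in> borel_measurable borel" for r
    using Gr_cont[of "Suc r"] by (intro borel_measurable_continuous_onI) simp
  show "(\<lambda>r. Gr (Suc r) \<theta>) \<longlonglongrightarrow> G0 \<theta>" for \<theta>
    using Gr_conv[of \<theta>] by (rule LIMSEQ_Suc)
qed

end

lemma HK_int_bdd:
  fixes f :: "real \<Rightarrow> 'b::euclidean_space"
  assumes meas: "f \<in> borel_measurable borel" and bnd: "\<And>x. norm (f x) \<le> B"
  shows "f integrable_on {a..b}"
proof -
  have "set_integrable lborel {a..b} f"
    unfolding set_integrable_def
  proof (rule integrableI_bounded_set[where A="{a..b}" and B=B])
    show "{a..b} \<in> sets lborel" by simp
    show "(\<lambda>x. indicator {a..b} x *\<^sub>R f x) \<in> borel_measurable lborel" using meas by simp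
    show "emeasure lborel {a..b} < \<infinity>" by (simp add: emeasure_lborel_Icc_eq)
    show "AE x in lborel. x \<in> {a..b} \<longrightarrow> norm (indicator {a..b} x *\<^sub>R f x) \<le> B"
      using bnd by (auto intro!: AE_I2)
    show "AE x in lborel. x \<notin> {a..b} \<longrightarrow> indicator {a..b} x *\<^sub>R f x = 0"
      by (auto intro!: AE_I2)
  qed
  then show ?thesis by (rule set_borel_integral_eq_integral(1))
qed

lemma integral_small_bound:
  fixes h :: "real \<Rightarrow> real"
  assumes int: "h integrable_on {t..u}" and tu: "t \<le> u" and b: "\<And>s. s \<in> {t..u} \<Longrightarrow> \<bar>h s\<bar> \<le> \<epsilon>" and e: "\<epsilon> \<ge> 0"
  shows "\<bar>integral {t..u} h\<bar> \<le> \<epsilon> * (u - t)"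
proof -
  have "norm (integral (cbox t u) h) \<le> \<epsilon> * measure lborel (cbox t u)"
    by (rule has_integral_bound[OF e]) (use int b in auto)
  then show ?thesis using tu by simp
qed

lemma integral_deriv_zero:
  fixes h :: "real \<Rightarrow> real"
  assumes int: "\<And>u. u \<ge> 0 \<Longrightarrow> h integrable_on {0..u}"
    and small: "\<And>\<epsilon>. \<epsilon> > 0 \<Longrightarrow> \<exists>\<delta>>0. \<forall>s\<ge>0. \<bar>s - t\<bar> < \<delta> \<longrightarrow> \<bar>h s\<bar> \<le> \<epsilon>"
    and t: "t \<ge> 0"
  shows "((\<lambda>u. integral {0..u} h) has_field_derivative 0) (at t within {0..})"
  unfolding has_field_derivative_def has_derivative_within_alt
proof (intro conjI allI impI)
  show "bounded_linear ((*) (0::real))" by (rule bounded_linear_mult_right)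
  fix \<epsilon> :: real assume e: "\<epsilon> > 0"
  obtain \<delta> where d: "\<delta> > 0" "\<And>s. s \<ge> 0 \<Longrightarrow> \<bar>s - t\<bar> < \<delta> \<Longrightarrow> \<bar>h s\<bar> \<le> \<epsilon>" using small[OF e] by blast
  show "\<exists>d>0. \<forall>y\<in>{0..}. norm (y - t) < d \<longrightarrow>
      norm (integral {0..y} h - integral {0..t} h - 0 * (y - t)) \<le> \<epsilon> * norm (y - t)"
  proof (intro exI[of _ \<delta>] conjI ballI impI)
    show "\<delta> > 0" by fact
    fix y :: real assume y: "y \<in> {0..}" and yd: "norm (y - t) < \<delta>"
    show "norm (integral {0..y} h - integral {0..t} h - 0 * (y - t)) \<le> \<epsilon> * norm (y - t)"
    proof (cases "t \<le> y")
      case True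
      have "integral {0..t} h + integral {t..y} h = integral {0..y} h"
        by (rule Henstock_Kurzweil_Integration.integral_combine) (use True t int[of y] y in auto)
      moreover have "\<bar>integral {t..y} h\<bar> \<le> \<epsilon> * (y - t)"
        by (rule integral_small_bound)
           (use True t y int[of y] d yd e in \<open>auto intro: integrable_subinterval_real\<close>)
      ultimately show ?thesis using True by simp
    next
      case False
      have "integral {0..y} h + integral {y..t} h = integral {0..t} h"
        by (rule Henstock_Kurzweil_Integration.integral_combine) (use False t int[of t] y in auto)
      moreover have "\<bar>integral {y..t} h\<bar> \<le> \<epsilon> * (t - y)"
        by (rule integral_small_bound)
           (use False t y int[of t] d yd e in \<open>auto intro: integrable_subinterval_real\<close>)
      ultimately show ?thesis using False by simp
    qed
  qed
qed

lemma chain_lip_zero: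
  fixes F :: "'a::real_normed_vector \<Rightarrow> real" and \<Theta> :: "real \<Rightarrow> 'a"
  assumes der: "(F has_derivative D) (at (\<Theta> t))"
    and lip: "\<And>u. u \<in> S \<Longrightarrow> norm (\<Theta> u - \<Theta> t) \<le> M * \<bar>u - t\<bar>" and M: "M \<ge> 0"
  shows "((\<lambda>u. F (\<Theta> u) - D (\<Theta> u)) has_field_derivative 0) (at t within S)"
  unfolding has_field_derivative_def has_derivative_within_alt
proof (intro conjI allI impI)
  show "bounded_linear ((*) (0::real))" by (rule bounded_linear_mult_right)
  have bl: "bounded_linear D" using der by (rule has_derivative_bounded_linear)
  fix \<epsilon> :: real assume e: "\<epsilon> > 0"
  have e': "\<epsilon> / (M + 1) > 0" using e M by simp
  obtain d' where d': "d' > 0" "\<And>y. norm (y - \<Theta> t) < d' \<Longrightarrow>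
      norm (F y - F (\<Theta> t) - D (y - \<Theta> t)) \<le> \<epsilon> / (M + 1) * norm (y - \<Theta> t)"
    using der[unfolded has_derivative_at_alt] e' by blast
  show "\<exists>d>0. \<forall>y\<in>S. norm (y - t) < d \<longrightarrow>
      norm (F (\<Theta> y) - D (\<Theta> y) - (F (\<Theta> t) - D (\<Theta> t)) - 0 * (y - t)) \<le> \<epsilon> * norm (y - t)"
  proof (intro exI[of _ "d' / (M + 1)"] conjI ballI impI)
    show "d' / (M + 1) > 0" using d' M by simp
    fix y assume y: "y \<in> S" and yd: "norm (y - t) < d' / (M + 1)"
    have "norm (\<Theta> y - \<Theta> t) \<le> M * \<bar>y - t\<bar>" by (rule lip[OF y])
    also have "\<dots> \<le> (M + 1) * \<bar>y - t\<bar>" by (simp add: mult_right_mono)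
    also have "\<dots> < d'" using yd M by (simp add: field_simps)
    finally have c: "norm (\<Theta> y - \<Theta> t) < d'" .
    have lin: "D (\<Theta> y) - D (\<Theta> t) = D (\<Theta> y - \<Theta> t)"
      using bl by (simp add: linear_diff bounded_linear.linear)
    have "\<bar>F (\<Theta> y) - D (\<Theta> y) - (F (\<Theta> t) - D (\<Theta> t))\<bar> = \<bar>F (\<Theta> y) - F (\<Theta> t) - D (\<Theta> y - \<Theta> t)\<bar>"
      using lin by (simp add: algebra_simps)
    also have "\<dots> \<le> \<epsilon> / (M + 1) * norm (\<Theta> y - \<Theta> t)" using d'(2)[OF c] by simp
    also have "\<dots> \<le> \<epsilon> / (M + 1) * (M * \<bar>y - t\<bar>)" using lip[OF y] e' by (intro mult_left_mono) auto
    also have "\<dots> \<le> \<epsilon> * \<bar>y - t\<bar>"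
    proof -
      have "M / (M + 1) \<le> 1" using M by simp
      then have "\<epsilon> * (M / (M + 1)) * \<bar>y - t\<bar> \<le> \<epsilon> * 1 * \<bar>y - t\<bar>"
        using e by (intro mult_right_mono mult_left_mono) auto
      then show ?thesis by (simp add: field_simps)
    qed
    finally show "norm (F (\<Theta> y) - D (\<Theta> y) - (F (\<Theta> t) - D (\<Theta> t)) - 0 * (y - t)) \<le> \<epsilon> * norm (y - t)"
      by simp
  qed
qed


locale nntraj = nnR d H e c a b f \<mu> R
  for d H :: nat and e :: "nat \<Rightarrow> 'n::finite" and c :: "nat \<Rightarrow> 'd::finite"
    and a b :: real and f :: "real^'d \<Rightarrow> real" and \<mu> :: "(real^'d) measure"
    and R :: "nat \<Rightarrow> real \<Rightarrow> real" +
  fixes \<Theta> :: "real \<Rightarrow> real^'n"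
  assumes \<Theta>_cont: "continuous_on {0..} \<Theta>" and \<Theta>_bdd: "bounded (\<Theta> ` {0..})"
    and \<Theta>_eq: "\<forall>t\<ge>0. \<Theta> t = \<Theta> 0 - integral {0..t} (\<lambda>s. G0 (\<Theta> s))"
begin

definition "\<rho>T = (SOME \<rho>. \<rho> \<ge> 0 \<and> (\<forall>t\<ge>0. norm (\<Theta> t) \<le> \<rho>))"

lemma \<rho>T: "\<rho>T \<ge> 0" "t \<ge> 0 \<Longrightarrow> norm (\<Theta> t) \<le> \<rho>T"
proof -
  obtain A where "\<forall>x\<in>\<Theta> ` {0..}. norm x \<le> A" using \<Theta>_bdd unfolding bounded_iff by blast
  then have "\<forall>t\<ge>0. norm (\<Theta> t) \<le> max A 0" by (auto simp: le_max_iff_disj)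
  then have "\<exists>\<rho>. \<rho> \<ge> 0 \<and> (\<forall>t\<ge>0. norm (\<Theta> t) \<le> \<rho>)"
    by (intro exI[of _ "max A 0"]) auto
  from someI_ex[OF this] show "\<rho>T \<ge> 0" "t \<ge> 0 \<Longrightarrow> norm (\<Theta> t) \<le> \<rho>T" unfolding \<rho>T_def by auto
qed

definition "MG = (SOME M. M \<ge> 0 \<and> (\<forall>\<theta>. norm \<theta> \<le> \<rho>T \<longrightarrow> norm (G0 \<theta>) \<le> M))"

lemma MG: "MG \<ge> 0" "norm \<theta> \<le> \<rho>T \<Longrightarrow> norm (G0 \<theta>) \<le> MG"
proof -
  obtain C where "\<forall>\<theta>. norm \<theta> \<le> \<rho>T \<longrightarrow> norm (G0 \<theta>) \<le> C" using G0_bound[OF \<rho>T(1)] by blast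
  then have "\<exists>M. M \<ge> 0 \<and> (\<forall>\<theta>. norm \<theta> \<le> \<rho>T \<longrightarrow> norm (G0 \<theta>) \<le> M)"
    by (intro exI[of _ "max C 0"]) force
  from someI_ex[OF this] show "MG \<ge> 0" "norm \<theta> \<le> \<rho>T \<Longrightarrow> norm (G0 \<theta>) \<le> MG" unfolding MG_def by auto
qed

lemma g_bd: "t \<ge> 0 \<Longrightarrow> norm (G0 (\<Theta> t)) \<le> MG"
  using MG(2) \<rho>T(2) by blast

definition "\<Theta>' s = \<Theta> (max s 0)"

lemma \<Theta>'_eq: "s \<ge> 0 \<Longrightarrow> \<Theta>' s = \<Theta> s"
  unfolding \<Theta>'_def by simp

lemma \<Theta>'_bd: "norm (\<Theta>' s) \<le> \<rho>T"
  unfolding \<Theta>'_def by (rule \<rho>T(2)) simp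

lemma \<Theta>'_cont: "continuous_on UNIV \<Theta>'"
  unfolding \<Theta>'_def by (rule continuous_on_compose2[OF \<Theta>_cont]) (auto intro!: continuous_intros)

lemma \<Theta>'_meas: "\<Theta>' \<in> borel_measurable borel"
  using \<Theta>'_cont by (rule borel_measurable_continuous_onI)

lemma gG_meas: "(\<lambda>s. G0 (\<Theta>' s)) \<in> borel_measurable borel"
  using measurable_compose[OF \<Theta>'_meas G0_meas] .

lemma int_prime: "(\<lambda>s. F (\<Theta>' s)) integrable_on {x..y} \<Longrightarrow> 0 \<le> x \<Longrightarrow> (\<lambda>s. F (\<Theta> s)) integrable_on {x..y}"
  by (subst integrable_cong[where g="\<lambda>s. F (\<Theta>' s)"]) (auto simp: \<Theta>'_eq)

lemma g_int: "0 \<le> x \<Longrightarrow> (\<lambda>s. G0 (\<Theta> s)) integrable_on {x..y}"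
  by (rule int_prime[where F=G0], rule HK_int_bdd[OF gG_meas]) (use MG(2)[OF \<Theta>'_bd] in auto)

lemma \<Theta>_lip: assumes t: "t \<ge> 0" and u: "u \<ge> 0" shows "norm (\<Theta> u - \<Theta> t) \<le> MG * \<bar>u - t\<bar>"
proof -
  have gen: "norm (\<Theta> y - \<Theta> x) \<le> MG * (y - x)" if "0 \<le> x" "x \<le> y" for x y
  proof -
    have comb: "integral {0..x} (\<lambda>s. G0 (\<Theta> s)) + integral {x..y} (\<lambda>s. G0 (\<Theta> s)) = integral {0..y} (\<lambda>s. G0 (\<Theta> s))"
      by (rule Henstock_Kurzweil_Integration.integral_combine) (use that g_int in auto)
    have ex: "\<Theta> x = \<Theta> 0 - integral {0..x} (\<lambda>s. G0 (\<Theta> s))" "\<Theta> y = \<Theta> 0 - integral {0..y} (\<lambda>s. G0 (\<Theta> s))"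
      using that by (auto intro!: \<Theta>_eq[rule_format])
    have "\<Theta> y - \<Theta> x = - integral {x..y} (\<lambda>s. G0 (\<Theta> s))"
      unfolding ex comb[symmetric] by simp
    have gi: "(\<lambda>s. G0 (\<Theta> s)) integrable_on cbox x y" using g_int[OF that(1)] by simp
    have "norm (integral (cbox x y) (\<lambda>s. G0 (\<Theta> s))) \<le> MG * measure lborel (cbox x y)"
    proof (rule has_integral_bound[OF MG(1)])
      show "((\<lambda>s. G0 (\<Theta> s)) has_integral integral (cbox x y) (\<lambda>s. G0 (\<Theta> s))) (cbox x y)"
        using gi by (rule integrable_integral)
      fix s assume "s \<in> cbox x y"
      then have "s \<ge> 0" using that by simp
      then show "norm (G0 (\<Theta> s)) \<le> MG" by (rule g_bd)
    qed
    then have "norm (integral {x..y} (\<lambda>s. G0 (\<Theta> s))) \<le> MG * (y - x)" using that by simp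
    then show ?thesis using \<open>\<Theta> y - \<Theta> x = - integral {x..y} (\<lambda>s. G0 (\<Theta> s))\<close> by simp
  qed
  show ?thesis
  proof (cases "t \<le> u")
    case True then show ?thesis using gen[OF t True] by simp
  next
    case False
    then have "norm (\<Theta> t - \<Theta> u) \<le> MG * (t - u)" using gen[OF u] by simp
    then show ?thesis using False by (simp add: norm_minus_commute)
  qed
qed

lemma GrC: assumes "r \<ge> 1" shows "\<exists>C. \<forall>\<theta>. norm \<theta> \<le> \<rho>T \<longrightarrow> norm (Gr r \<theta>) \<le> C"
  using Gr_bound[OF \<rho>T(1)] assms by blast

lemma inner_int:
  assumes r: "r \<ge> 1" and x: "0 \<le> x"
  shows "(\<lambda>s. (Gr r (\<Theta> s) - q) \<bullet> G0 (\<Theta> s)) integrable_on {x..y}"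
proof -
  obtain C where C: "\<And>\<theta>. norm \<theta> \<le> \<rho>T \<Longrightarrow> norm (Gr r \<theta>) \<le> C" using GrC[OF r] by blast
  have "continuous_on UNIV (\<lambda>s. Gr r (\<Theta>' s))"
    by (rule continuous_on_compose2[OF Gr_cont[OF r] \<Theta>'_cont]) auto
  then have m: "(\<lambda>s. Gr r (\<Theta>' s)) \<in> borel_measurable borel"
    by (rule borel_measurable_continuous_onI)
  have "(\<lambda>s. (Gr r (\<Theta>' s) - q) \<bullet> G0 (\<Theta>' s)) integrable_on {x..y}"
  proof (rule HK_int_bdd[where B="(C + norm q) * MG"])
    show "(\<lambda>s. (Gr r (\<Theta>' s) - q) \<bullet> G0 (\<Theta>' s)) \<in> borel_measurable borel"
      by (intro borel_measurable_inner borel_measurable_diff m gG_meas borel_measurable_const)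
    fix s
    have "norm ((Gr r (\<Theta>' s) - q) \<bullet> G0 (\<Theta>' s)) \<le> norm (Gr r (\<Theta>' s) - q) * norm (G0 (\<Theta>' s))"
      using Cauchy_Schwarz_ineq2 by simp
    also have "\<dots> \<le> (C + norm q) * MG"
    proof (rule mult_mono)
      show "norm (Gr r (\<Theta>' s) - q) \<le> C + norm q"
        using C[OF \<Theta>'_bd[of s]] norm_triangle_ineq4[of "Gr r (\<Theta>' s)" q] by linarith
      show "norm (G0 (\<Theta>' s)) \<le> MG" by (rule MG(2)[OF \<Theta>'_bd[of s]])
      show "0 \<le> C + norm q" using C[OF \<Theta>'_bd[of s]] norm_ge_zero[of "Gr r (\<Theta>' s)"] norm_ge_zero[of q] by linarith
    qed simp
    finally show "norm ((Gr r (\<Theta>' s) - q) \<bullet> G0 (\<Theta>' s)) \<le> (C + norm q) * MG" .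
  qed
  then show ?thesis by (rule int_prime[where F="\<lambda>v. (Gr r v - q) \<bullet> G0 v"]) (use x in simp)
qed

lemma energy_r:
  assumes r: "r \<ge> 1" and t: "t \<ge> 0"
  shows "Lr r (\<Theta> t) + integral {0..t} (\<lambda>s. Gr r (\<Theta> s) \<bullet> G0 (\<Theta> s)) = Lr r (\<Theta> 0)"
proof -
  define \<psi> where "\<psi> u = integral {0..u} (\<lambda>s. Gr r (\<Theta> s) \<bullet> G0 (\<Theta> s))" for u
  have int1: "(\<lambda>s. Gr r (\<Theta> s) \<bullet> G0 (\<Theta> s)) integrable_on {0..u}" for u
    using inner_int[OF r order_refl, of 0 u] by simp
  have der: "((\<lambda>u. Lr r (\<Theta> u) + \<psi> u) has_field_derivative 0) (at t within {0..})" if t: "t \<ge> 0" for t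
  proof -
    define q where "q = Gr r (\<Theta> t)"
    have A: "((\<lambda>u. Lr r (\<Theta> u) - q \<bullet> \<Theta> u) has_field_derivative 0) (at t within {0..})"
      unfolding q_def
      by (rule chain_lip_zero[OF Lr_deriv[OF r], where M=MG]) (use \<Theta>_lip t MG(1) in auto)
    define h2 where "h2 s = (Gr r (\<Theta> s) - q) \<bullet> G0 (\<Theta> s)" for s
    have B0: "((\<lambda>u. integral {0..u} h2) has_field_derivative 0) (at t within {0..})"
    proof (rule integral_deriv_zero[OF _ _ t])
      show "h2 integrable_on {0..u}" for u unfolding h2_def by (rule inner_int[OF r order_refl])
      fix \<epsilon> :: real assume e: "\<epsilon> > 0"
      have cont: "continuous_on {0..} (\<lambda>s. Gr r (\<Theta> s))"
        by (rule continuous_on_compose2[OF Gr_cont[OF r] \<Theta>_cont]) auto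
      have e': "\<epsilon> / (MG + 1) > 0" using e MG(1) by simp
      have "\<exists>\<delta>>0. \<forall>s\<in>{0..}. dist s t < \<delta> \<longrightarrow> dist (Gr r (\<Theta> s)) (Gr r (\<Theta> t)) < \<epsilon> / (MG + 1)"
        using bspec[OF cont[unfolded continuous_on_iff], of t] t e' by simp
      then obtain \<delta> where d: "\<delta> > 0" "\<And>s. s \<in> {0..} \<Longrightarrow> dist s t < \<delta> \<Longrightarrow> dist (Gr r (\<Theta> s)) (Gr r (\<Theta> t)) < \<epsilon> / (MG + 1)"
        by blast
      show "\<exists>\<delta>>0. \<forall>s\<ge>0. \<bar>s - t\<bar> < \<delta> \<longrightarrow> \<bar>h2 s\<bar> \<le> \<epsilon>"
      proof (intro exI[of _ \<delta>] conjI allI impI)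
        fix s :: real assume s: "s \<ge> 0" "\<bar>s - t\<bar> < \<delta>"
        have n1: "norm (Gr r (\<Theta> s) - q) \<le> \<epsilon> / (MG + 1)"
          using d(2)[of s] s unfolding q_def dist_norm by auto
        have "\<bar>h2 s\<bar> \<le> norm (Gr r (\<Theta> s) - q) * norm (G0 (\<Theta> s))"
          unfolding h2_def by (rule Cauchy_Schwarz_ineq2)
        also have "\<dots> \<le> \<epsilon> / (MG + 1) * MG"
          using n1 g_bd[OF s(1)] e' by (intro mult_mono) auto
        also have "\<dots> \<le> \<epsilon>"
        proof -
          have "MG / (MG + 1) \<le> 1" using MG(1) by simp
          then have "\<epsilon> * (MG / (MG + 1)) \<le> \<epsilon> * 1" using e by (intro mult_left_mono) auto
          then show ?thesis by simp
        qed
        finally show "\<bar>h2 s\<bar> \<le> \<epsilon>" .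
      qed (use d in simp)
    qed
    have B1: "((\<lambda>u. q \<bullet> \<Theta> 0 + integral {0..u} h2) has_field_derivative 0 + 0) (at t within {0..})"
      by (intro DERIV_add DERIV_const B0)
    have B: "((\<lambda>u. q \<bullet> \<Theta> u + \<psi> u) has_field_derivative 0) (at t within {0..})"
    proof (rule has_field_derivative_transform_within[OF _ zero_less_one])
      show "((\<lambda>u. q \<bullet> \<Theta> 0 + integral {0..u} h2) has_field_derivative 0) (at t within {0..})" using B1 by simp
      show "t \<in> {0..}" using t by simp
      fix u :: real assume u: "u \<in> {0..}"
      have gi: "(\<lambda>s. G0 (\<Theta> s)) integrable_on {0..u}" by (rule g_int) simp
      have qi: "(\<lambda>s. q \<bullet> G0 (\<Theta> s)) integrable_on {0..u}"
        using integrable_linear[OF gi bounded_linear_inner_right[of q]] by (simp add: o_def)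
      have "\<Theta> u = \<Theta> 0 - integral {0..u} (\<lambda>s. G0 (\<Theta> s))"
        using u by (auto intro!: \<Theta>_eq[rule_format])
      then have "q \<bullet> \<Theta> u = q \<bullet> \<Theta> 0 - q \<bullet> integral {0..u} (\<lambda>s. G0 (\<Theta> s))"
        by (simp only: inner_diff_right)
      also have "q \<bullet> integral {0..u} (\<lambda>s. G0 (\<Theta> s)) = integral {0..u} (\<lambda>s. q \<bullet> G0 (\<Theta> s))"
        using integral_linear[OF gi bounded_linear_inner_right[of q]] by (simp add: o_def)
      finally have 1: "q \<bullet> \<Theta> u = q \<bullet> \<Theta> 0 - integral {0..u} (\<lambda>s. q \<bullet> G0 (\<Theta> s))" .
      have "integral {0..u} h2 = integral {0..u} (\<lambda>s. Gr r (\<Theta> s) \<bullet> G0 (\<Theta> s) - q \<bullet> G0 (\<Theta> s))"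
        unfolding h2_def by (simp add: inner_diff_left)
      also have "\<dots> = \<psi> u - integral {0..u} (\<lambda>s. q \<bullet> G0 (\<Theta> s))"
        unfolding \<psi>_def by (rule Henstock_Kurzweil_Integration.integral_diff[OF int1 qi])
      finally show "q \<bullet> \<Theta> 0 + integral {0..u} h2 = q \<bullet> \<Theta> u + \<psi> u" using 1 by simp
    qed
    have "((\<lambda>u. (Lr r (\<Theta> u) - q \<bullet> \<Theta> u) + (q \<bullet> \<Theta> u + \<psi> u)) has_field_derivative 0 + 0) (at t within {0..})"
      by (rule DERIV_add[OF A B])
    then show ?thesis by simp
  qed
  obtain C where "\<forall>x\<in>{0..}. Lr r (\<Theta> x) + \<psi> x = C"
    using has_field_derivative_zero_constant[of "{0..}" "\<lambda>u. Lr r (\<Theta> u) + \<psi> u"] der by auto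
  then have "Lr r (\<Theta> t) + \<psi> t = Lr r (\<Theta> 0) + \<psi> 0" using t by simp
  then show ?thesis unfolding \<psi>_def by simp
qed

end

context nntraj
begin

lemma sq_int: "0 \<le> x \<Longrightarrow> (\<lambda>s. (norm (G0 (\<Theta> s)))\<^sup>2) integrable_on {x..y}"
proof -
  assume x: "0 \<le> x"
  have "(\<lambda>s. (norm (G0 (\<Theta>' s)))\<^sup>2) integrable_on {x..y}"
  proof (rule HK_int_bdd[where B="MG\<^sup>2"])
    show "(\<lambda>s. (norm (G0 (\<Theta>' s)))\<^sup>2) \<in> borel_measurable borel"
      using gG_meas by measurable
    fix s show "norm ((norm (G0 (\<Theta>' s)))\<^sup>2) \<le> MG\<^sup>2"
      using MG(2)[OF \<Theta>'_bd[of s]] by (simp add: power_mono)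
  qed
  then show ?thesis by (rule int_prime[where F="\<lambda>v. (norm (G0 v))\<^sup>2"]) (use x in simp)
qed

lemma energy:
  assumes t: "t \<ge> 0"
  shows "Li (\<Theta> t) + integral {0..t} (\<lambda>s. (norm (G0 (\<Theta> s)))\<^sup>2) = Li (\<Theta> 0)"
proof -
  obtain C where C: "\<And>r \<theta>. r \<ge> 1 \<Longrightarrow> norm \<theta> \<le> \<rho>T \<Longrightarrow> norm (Gr r \<theta>) \<le> C"
    using Gr_bound[OF \<rho>T(1)] by blast
  have "norm (Gr 1 0) \<le> C" using C[of 1 0] \<rho>T(1) by simp
  then have C0: "C \<ge> 0" by (rule order_trans[OF norm_ge_zero])
  have conv: "(\<lambda>k. integral {0..t} (\<lambda>s. Gr (Suc k) (\<Theta> s) \<bullet> G0 (\<Theta> s))) \<longlonglongrightarrow> integral {0..t} (\<lambda>s. G0 (\<Theta> s) \<bullet> G0 (\<Theta> s))"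
  proof (rule dominated_convergence(2)[where h="\<lambda>_. C * MG"])
    show "(\<lambda>s. Gr (Suc k) (\<Theta> s) \<bullet> G0 (\<Theta> s)) integrable_on {0..t}" for k
      using inner_int[of "Suc k" 0 0 t] by simp
    show "(\<lambda>_. C * MG) integrable_on {0..t}" by (rule Henstock_Kurzweil_Integration.integrable_const_ivl)
    show "norm (Gr (Suc k) (\<Theta> s) \<bullet> G0 (\<Theta> s)) \<le> C * MG" if "s \<in> {0..t}" for k s
    proof -
      have "norm (Gr (Suc k) (\<Theta> s) \<bullet> G0 (\<Theta> s)) \<le> norm (Gr (Suc k) (\<Theta> s)) * norm (G0 (\<Theta> s))"
        using Cauchy_Schwarz_ineq2 by simp
      also have "\<dots> \<le> C * MG"
        using C[of "Suc k" "\<Theta> s"] \<rho>T(2)[of s] g_bd[of s] that C0 by (intro mult_mono) auto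
      finally show ?thesis .
    qed
    show "(\<lambda>k. Gr (Suc k) (\<Theta> s) \<bullet> G0 (\<Theta> s)) \<longlonglongrightarrow> G0 (\<Theta> s) \<bullet> G0 (\<Theta> s)" if "s \<in> {0..t}" for s
      by (intro tendsto_inner tendsto_const LIMSEQ_Suc[OF Gr_conv])
  qed
  have "(\<lambda>k. Lr (Suc k) (\<Theta> t) + integral {0..t} (\<lambda>s. Gr (Suc k) (\<Theta> s) \<bullet> G0 (\<Theta> s)))
      \<longlonglongrightarrow> Li (\<Theta> t) + integral {0..t} (\<lambda>s. G0 (\<Theta> s) \<bullet> G0 (\<Theta> s))"
    by (intro tendsto_add conv LIMSEQ_Suc[OF Lr_conv])
  moreover have "(\<lambda>k. Lr (Suc k) (\<Theta> t) + integral {0..t} (\<lambda>s. Gr (Suc k) (\<Theta> s) \<bullet> G0 (\<Theta> s)))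
      = (\<lambda>k. Lr (Suc k) (\<Theta> 0))"
    using energy_r[OF _ t] by simp
  ultimately have l1: "(\<lambda>k. Lr (Suc k) (\<Theta> 0)) \<longlonglongrightarrow> Li (\<Theta> t) + integral {0..t} (\<lambda>s. G0 (\<Theta> s) \<bullet> G0 (\<Theta> s))"
    by simp
  have l2: "(\<lambda>k. Lr (Suc k) (\<Theta> 0)) \<longlonglongrightarrow> Li (\<Theta> 0)" by (rule LIMSEQ_Suc[OF Lr_conv])
  have "Li (\<Theta> t) + integral {0..t} (\<lambda>s. G0 (\<Theta> s) \<bullet> G0 (\<Theta> s)) = Li (\<Theta> 0)"
    by (rule LIMSEQ_unique[OF l1 l2])
  then show ?thesis by (simp add: power2_norm_eq_inner)
qed

lemma Li_nonneg: "Li \<theta> \<ge> 0"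
  unfolding Li_def Fl_def by (rule Bochner_Integration.integral_nonneg) simp

lemma I_split:
  assumes "0 \<le> s" "s \<le> t"
  shows "integral {0..s} (\<lambda>u. (norm (G0 (\<Theta> u)))\<^sup>2) + integral {s..t} (\<lambda>u. (norm (G0 (\<Theta> u)))\<^sup>2)
     = integral {0..t} (\<lambda>u. (norm (G0 (\<Theta> u)))\<^sup>2)"
  by (rule Henstock_Kurzweil_Integration.integral_combine) (use assms sq_int in auto)

lemma Li_mono:
  assumes s: "0 \<le> s" and st: "s \<le> t"
  shows "Li (\<Theta> t) \<le> Li (\<Theta> s)"
proof -
  have "0 \<le> integral {s..t} (\<lambda>u. (norm (G0 (\<Theta> u)))\<^sup>2)"
    by (rule Henstock_Kurzweil_Integration.integral_nonneg) (use sq_int s in auto)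
  then show ?thesis using energy[of s] energy[of t] I_split[OF s st] s st by linarith
qed

lemma small_grad:
  assumes e: "\<epsilon> > 0" and T: "T \<ge> 0"
  shows "\<exists>t\<ge>T. norm (G0 (\<Theta> t)) < \<epsilon>"
proof (rule ccontr)
  assume nt: "\<not> ?thesis"
  have big: "\<epsilon> \<le> norm (G0 (\<Theta> t))" if "t \<ge> T" for t
  proof (rule ccontr)
    assume "\<not> \<epsilon> \<le> norm (G0 (\<Theta> t))"
    then have "norm (G0 (\<Theta> t)) < \<epsilon>" by simp
    then show False using nt that by blast
  qed
  define T' where "T' = T + Li (\<Theta> 0) / \<epsilon>\<^sup>2 + 1"
  have TT': "T \<le> T'" unfolding T'_def using Li_nonneg[of "\<Theta> 0"] e by simp
  have "integral {T..T'} (\<lambda>_. \<epsilon>\<^sup>2) \<le> integral {T..T'} (\<lambda>u. (norm (G0 (\<Theta> u)))\<^sup>2)"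
  proof (rule integral_le)
    show "(\<lambda>u. (norm (G0 (\<Theta> u)))\<^sup>2) integrable_on {T..T'}" using sq_int T by simp
    show "(\<lambda>_. \<epsilon>\<^sup>2) integrable_on {T..T'}" by (rule Henstock_Kurzweil_Integration.integrable_const_ivl)
    fix u assume "u \<in> {T..T'}"
    then show "\<epsilon>\<^sup>2 \<le> (norm (G0 (\<Theta> u)))\<^sup>2" using big[of u] e by (intro power_mono) auto
  qed
  moreover have "integral {T..T'} (\<lambda>_. \<epsilon>\<^sup>2) = (T' - T) * \<epsilon>\<^sup>2" using TT' by simp
  moreover have "(T' - T) * \<epsilon>\<^sup>2 = Li (\<Theta> 0) + \<epsilon>\<^sup>2" unfolding T'_def using e by (simp add: field_simps)
  moreover have "0 \<le> integral {0..T} (\<lambda>u. (norm (G0 (\<Theta> u)))\<^sup>2)"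
    by (rule Henstock_Kurzweil_Integration.integral_nonneg) (use sq_int in auto)
  ultimately have "Li (\<Theta> 0) + \<epsilon>\<^sup>2 \<le> integral {0..T'} (\<lambda>u. (norm (G0 (\<Theta> u)))\<^sup>2)"
    using I_split[OF T TT'] by linarith
  moreover have "integral {0..T'} (\<lambda>u. (norm (G0 (\<Theta> u)))\<^sup>2) \<le> Li (\<Theta> 0)"
    using energy[of T'] Li_nonneg[of "\<Theta> T'"] T TT' by linarith
  moreover have "\<epsilon>\<^sup>2 > 0" using e by simp
  ultimately show False by linarith
qed

lemma traj_main:
  "\<exists>v. G0 v = 0 \<and> Limsup at_top (\<lambda>t. ereal (Li (\<Theta> t))) = ereal (Li v) \<and> Li v \<le> Li (\<Theta> 0)"
proof -
  have "\<forall>n::nat. \<exists>t. t \<ge> real n \<and> norm (G0 (\<Theta> t)) < inverse (real (Suc n))"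
    using small_grad by simp
  from choice[OF this] obtain \<tau> where \<tau>0: "\<forall>n. \<tau> n \<ge> real n \<and> norm (G0 (\<Theta> (\<tau> n))) < inverse (real (Suc n))"
    by blast
  then have \<tau>: "\<And>n. \<tau> n \<ge> real n" "\<And>n. norm (G0 (\<Theta> (\<tau> n))) < inverse (real (Suc n))"
    by auto
  have "\<tau> n \<ge> 0" for n using \<tau>(1)[of n] of_nat_0_le_iff[of n] by linarith
  then have "range (\<lambda>n. \<Theta> (\<tau> n)) \<subseteq> \<Theta> ` {0..}" by auto
  then have bdr: "bounded (range (\<lambda>n. \<Theta> (\<tau> n)))" using \<Theta>_bdd bounded_subset by blast
  obtain vt \<sigma> where \<sigma>: "strict_mono (\<sigma>::nat \<Rightarrow> nat)" and lim: "((\<lambda>n. \<Theta> (\<tau> n)) \<circ> \<sigma>) \<longlonglongrightarrow> vt"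
    using bounded_imp_convergent_subsequence[OF bdr] by auto
  define tt where "tt n = \<tau> (\<sigma> n)" for n
  have tt_ge: "tt n \<ge> real n" for n
    using \<tau>(1)[of "\<sigma> n"] seq_suble[OF \<sigma>, of n] unfolding tt_def by linarith
  have tt_nn: "tt n \<ge> 0" for n using tt_ge[of n] by linarith
  have lim': "(\<lambda>n. \<Theta> (tt n)) \<longlonglongrightarrow> vt" using lim unfolding tt_def o_def .
  have small: "norm (G0 (\<Theta> (tt n))) < inverse (real (Suc n))" for n
  proof -
    have "inverse (real (Suc (\<sigma> n))) \<le> inverse (real (Suc n))"
      using seq_suble[OF \<sigma>, of n] by (simp add: le_imp_inverse_le)
    then show ?thesis using \<tau>(2)[of "\<sigma> n"] unfolding tt_def by linarith
  qed
  have Gvt: "G0 vt = 0"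
  proof (rule ccontr)
    assume "G0 vt \<noteq> 0"
    then have dpos: "norm (G0 vt) / 2 > 0" by simp
    have ev1: "\<forall>\<^sub>F \<theta> in nhds vt. norm (G0 vt) - norm (G0 vt) / 2 < norm (G0 \<theta>)"
      by (rule G0_lsc[OF dpos])
    have "\<forall>\<^sub>F n in sequentially. norm (G0 vt) - norm (G0 vt) / 2 < norm (G0 (\<Theta> (tt n)))"
      using lim' ev1 unfolding filterlim_iff[of _ "nhds vt"] by blast
    moreover have "\<forall>\<^sub>F n in sequentially. inverse (real (Suc n)) < norm (G0 vt) / 2"
      by (rule order_tendstoD(2)[OF LIMSEQ_inverse_real_of_nat dpos])
    ultimately have "\<forall>\<^sub>F n in sequentially. False"
    proof eventually_elim
      case (elim n) then show False using small[of n] by linarith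
    qed
    then show False by simp
  qed
  have Lcont: "isCont Li vt" using Li_cont by (simp add: continuous_on_eq_continuous_at)
  have Llim: "(\<lambda>n. Li (\<Theta> (tt n))) \<longlonglongrightarrow> Li vt" by (rule isCont_tendsto_compose[OF Lcont lim'])
  have lower: "Li vt \<le> Li (\<Theta> t)" if t: "t \<ge> 0" for t
  proof (rule LIMSEQ_le_const2[OF Llim])
    show "\<exists>N. \<forall>n\<ge>N. Li (\<Theta> (tt n)) \<le> Li (\<Theta> t)"
    proof (intro exI[of _ "nat \<lceil>t\<rceil>"] allI impI)
      fix n assume "nat \<lceil>t\<rceil> \<le> n"
      then have "t \<le> real n" by linarith
      then have "t \<le> tt n" using tt_ge[of n] by linarith
      then show "Li (\<Theta> (tt n)) \<le> Li (\<Theta> t)" by (rule Li_mono[OF t])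
    qed
  qed
  have tlim: "((\<lambda>t. Li (\<Theta> t)) \<longlongrightarrow> Li vt) at_top"
  proof (rule order_tendstoI)
    fix y assume "y < Li vt"
    then show "\<forall>\<^sub>F t in at_top. y < Li (\<Theta> t)"
      unfolding eventually_at_top_linorder
    proof (intro exI[of _ 0] allI impI)
      fix t :: real assume "0 \<le> t"
      then show "y < Li (\<Theta> t)" using lower[of t] \<open>y < Li vt\<close> by linarith
    qed
  next
    fix y assume y: "Li vt < y"
    have "\<forall>\<^sub>F n in sequentially. Li (\<Theta> (tt n)) < y" by (rule order_tendstoD(2)[OF Llim y])
    then obtain n where n: "Li (\<Theta> (tt n)) < y" by (auto simp: eventually_sequentially)
    show "\<forall>\<^sub>F t in at_top. Li (\<Theta> t) < y"
      unfolding eventually_at_top_linorder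
    proof (intro exI[of _ "tt n"] allI impI)
      fix t assume "tt n \<le> t"
      then have "Li (\<Theta> t) \<le> Li (\<Theta> (tt n))" by (rule Li_mono[OF tt_nn])
      then show "Li (\<Theta> t) < y" using n by linarith
    qed
  qed
  have "Limsup at_top (\<lambda>t. ereal (Li (\<Theta> t))) = ereal (Li vt)"
    by (rule lim_imp_Limsup) (use tlim in \<open>simp_all\<close>)
  then show ?thesis using Gvt lower[of 0] by blast
qed

end

theorem theorem1p1:
  fixes d H :: nat and a b :: real
    and e :: "nat \<Rightarrow> 'n::finite" and c :: "nat \<Rightarrow> 'd::finite"
    and f :: "real^'d \<Rightarrow> real"
    and R :: "nat \<Rightarrow> real \<Rightarrow> real"
    and \<mu> :: "(real^'d) measure"
    and L :: "nat \<Rightarrow> real^'n \<Rightarrow> real" and Linf :: "real^'n \<Rightarrow> real"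
    and G :: "real^'n \<Rightarrow> real^'n"
  assumes dpos: "d \<ge> 1" and Hpos: "H \<ge> 1"
    and ab: "a < b"
    and e_bij: "bij_betw e {1..d*H + 2*H + 1} UNIV"
    and c_bij: "bij_betw c {1..d} UNIV"
    and f_cont: "continuous_on (cube a b) f"
    and R_C1: "\<forall>r\<ge>1. R r C1_differentiable_on UNIV"
    and R_bdd: "\<forall>x. bdd_above {\<bar>R r y\<bar> + \<bar>deriv (R r) y\<bar> | r y. r \<ge> 1 \<and> y \<in> {-\<bar>x\<bar>..\<bar>x\<bar>}}"
    and R_lim: "\<forall>x. limsup (\<lambda>r. ereal (\<bar>R r x - max x 0\<bar>
                      + \<bar>deriv (R r) x - indicator {0<..} x\<bar>)) = 0"
    and mu_sets: "sets \<mu> = sets (restrict_space lborel (cube a b))"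
    and mu_fin: "finite_measure \<mu>"
    and mu_ac: "absolutely_continuous (restrict_space lborel (cube a b)) \<mu>"
    and L_def: "\<forall>r \<theta>. L r \<theta> = nn_loss \<mu> f d H e c (R r) \<theta>"
    and Linf_def: "\<forall>\<theta>. Linf \<theta> = nn_loss \<mu> f d H e c (\<lambda>y. max y 0) \<theta>"
    and G_def: "\<forall>\<theta>. convergent (\<lambda>r. gradient (L r) \<theta>) \<longrightarrow>
                   G \<theta> = lim (\<lambda>r. gradient (L r) \<theta>)"
  shows
    "((\<forall>\<theta>. \<exists>\<epsilon>>0. bounded (G ` ball \<theta> \<epsilon>)) \<and> G \<in> borel_measurable borel)
     \<and> lower_semicont (\<lambda>\<theta>. norm (G \<theta>))
     \<and> (\<exists>U. open U \<and> (- U) \<in> null_sets lborel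
           \<and> (\<forall>\<theta>\<in>U. (Linf has_derivative (\<lambda>h. G \<theta> \<bullet> h)) (at \<theta>))
           \<and> continuous_on U G)
     \<and> (\<forall>\<Theta> :: real \<Rightarrow> real^'n.
          continuous_on {0..} \<Theta> \<and> bounded (\<Theta> ` {0..})
          \<and> (\<forall>t\<ge>0. \<Theta> t = \<Theta> 0 - integral {0..t} (\<lambda>s. G (\<Theta> s)))
          \<longrightarrow> (\<exists>v. G v = 0 \<and>
                 Limsup at_top (\<lambda>t. ereal (Linf (\<Theta> t))) = ereal (Linf v)))
     \<and> (\<forall>\<Theta> :: real \<Rightarrow> real^'n.
          continuous_on {0..} \<Theta> \<and> bounded (\<Theta> ` {0..})
          \<and> (\<forall>t\<ge>0. \<Theta> t = \<Theta> 0 - integral {0..t} (\<lambda>s. G (\<Theta> s)))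
          \<and> (\<forall>\<theta>. G \<theta> = 0 \<and> ereal (Linf \<theta>) > (INF v. ereal (Linf v))
                 \<longrightarrow> Linf (\<Theta> 0) < Linf \<theta>)
          \<longrightarrow> Limsup at_top (\<lambda>t. ereal (Linf (\<Theta> t))) = (INF v. ereal (Linf v)))"
proof -
  have nnR_inst: "nnR d H e c a b f \<mu> R"
    by (intro nnR.intro nnsetup.intro nnR_axioms.intro e_bij c_bij f_cont mu_sets mu_fin mu_ac R_C1 R_bdd R_lim)
  interpret N: nnR d H e c a b f \<mu> R by (rule nnR_inst)
  have Leq: "L r = N.Lr r" for r
    by (rule ext) (simp add: L_def N.nn_loss_eq N.Lr_def)
  have Linf_eq: "Linf = N.Li"
    by (rule ext) (simp add: Linf_def N.nn_loss_eq N.Li_def)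
  have Geq: "G = N.G0"
  proof (rule ext)
    fix \<theta>
    have "(\<lambda>r. gradient (L (Suc r)) \<theta>) = (\<lambda>r. N.Gr (Suc r) \<theta>)"
      by (rule ext, unfold Leq) (rule gradient_eqI[OF N.Lr_deriv], simp)
    then have "(\<lambda>r. gradient (L (Suc r)) \<theta>) \<longlonglongrightarrow> N.G0 \<theta>"
      using LIMSEQ_Suc[OF N.Gr_conv[of \<theta>]] by simp
    then have lim: "(\<lambda>r. gradient (L r) \<theta>) \<longlonglongrightarrow> N.G0 \<theta>" by (rule LIMSEQ_imp_Suc)
    then have "convergent (\<lambda>r. gradient (L r) \<theta>)" by (auto simp: convergent_def)
    then have "G \<theta> = lim (\<lambda>r. gradient (L r) \<theta>)" using G_def by blast
    also have "\<dots> = N.G0 \<theta>" using lim by (rule limI)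
    finally show "G \<theta> = N.G0 \<theta>" .
  qed
  have part1: "(\<forall>\<theta>. \<exists>\<epsilon>>0. bounded (G ` ball \<theta> \<epsilon>)) \<and> G \<in> borel_measurable borel"
  proof
    show "\<forall>\<theta>. \<exists>\<epsilon>>0. bounded (G ` ball \<theta> \<epsilon>)"
    proof
      fix \<theta> :: "real^'n"
      obtain C where C: "\<And>\<theta>'. norm \<theta>' \<le> norm \<theta> + 1 \<Longrightarrow> norm (N.G0 \<theta>') \<le> C"
        using N.G0_bound[of "norm \<theta> + 1"] by auto
      have "bounded (G ` ball \<theta> 1)"
        unfolding bounded_iff Geq
      proof (intro exI[of _ C] ballI)
        fix y assume "y \<in> N.G0 ` ball \<theta> 1"
        then obtain \<theta>' where th: "\<theta>' \<in> ball \<theta> 1" "y = N.G0 \<theta>'" by auto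
        have "norm \<theta>' \<le> norm \<theta> + 1"
          using th(1) norm_triangle_ineq2[of \<theta>' \<theta>] by (simp add: dist_norm norm_minus_commute)
        then show "norm y \<le> C" using C th(2) by simp
      qed
      then show "\<exists>\<epsilon>>0. bounded (G ` ball \<theta> \<epsilon>)" by (intro exI[of _ 1]) simp
    qed
    show "G \<in> borel_measurable borel" unfolding Geq by (rule N.G0_meas)
  qed
  have part2: "lower_semicont (\<lambda>\<theta>. norm (G \<theta>))"
    unfolding lower_semicont_def Geq
  proof (intro allI impI)
    fix x :: "real^'n" and \<epsilon> :: real assume e: "\<epsilon> > 0"
    show "\<forall>\<^sub>F y in at x. norm (N.G0 x) - \<epsilon> < norm (N.G0 y)"
      unfolding eventually_at_filter by (rule eventually_mono[OF N.G0_lsc[OF e]]) simp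
  qed
  have part3: "\<exists>U. open U \<and> (- U) \<in> null_sets lborel
           \<and> (\<forall>\<theta>\<in>U. (Linf has_derivative (\<lambda>h. G \<theta> \<bullet> h)) (at \<theta>))
           \<and> continuous_on U G"
  proof (intro exI[of _ "{\<theta>::real^'n. \<forall>i\<in>{1..H}. N.nd \<theta> i}"] conjI ballI)
    show "open {\<theta>::real^'n. \<forall>i\<in>{1..H}. N.nd \<theta> i}" by (rule N.open_U)
    show "- {\<theta>::real^'n. \<forall>i\<in>{1..H}. N.nd \<theta> i} \<in> null_sets lborel" by (rule N.null_U)
    fix \<theta> assume "\<theta> \<in> {\<theta>::real^'n. \<forall>i\<in>{1..H}. N.nd \<theta> i}"
    then show "(Linf has_derivative (\<lambda>h. G \<theta> \<bullet> h)) (at \<theta>)"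
      unfolding Linf_eq Geq by (intro N.Li_deriv_U) simp
  next
    show "continuous_on {\<theta>::real^'n. \<forall>i\<in>{1..H}. N.nd \<theta> i} G"
      unfolding Geq by (intro continuous_at_imp_continuous_on ballI N.G0_cont_U) simp
  qed
  have traj: "\<exists>v. G v = 0 \<and> Limsup at_top (\<lambda>t. ereal (Linf (\<Theta> t))) = ereal (Linf v) \<and> Linf v \<le> Linf (\<Theta> 0)"
    if A: "continuous_on {0..} \<Theta> \<and> bounded (\<Theta> ` {0..})
          \<and> (\<forall>t\<ge>0. \<Theta> t = \<Theta> 0 - integral {0..t} (\<lambda>s. G (\<Theta> s)))" for \<Theta> :: "real \<Rightarrow> real^'n"
  proof -
    from A have A1: "continuous_on {0..} \<Theta>" and A2: "bounded (\<Theta> ` {0..})"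
      and A3: "\<forall>t\<ge>0. \<Theta> t = \<Theta> 0 - integral {0..t} (\<lambda>s. G (\<Theta> s))" by blast+
    have "nntraj d H e c a b f \<mu> R \<Theta>"
      by (intro nntraj.intro[OF nnR_inst] nntraj_axioms.intro A1 A2 A3[unfolded Geq])
    then interpret T: nntraj d H e c a b f \<mu> R \<Theta> .
    show ?thesis using T.traj_main unfolding Geq Linf_eq .
  qed
  have part4: "\<forall>\<Theta> :: real \<Rightarrow> real^'n.
          continuous_on {0..} \<Theta> \<and> bounded (\<Theta> ` {0..})
          \<and> (\<forall>t\<ge>0. \<Theta> t = \<Theta> 0 - integral {0..t} (\<lambda>s. G (\<Theta> s)))
          \<longrightarrow> (\<exists>v. G v = 0 \<and>
                 Limsup at_top (\<lambda>t. ereal (Linf (\<Theta> t))) = ereal (Linf v))"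
    using traj by blast
  have part5: "\<forall>\<Theta> :: real \<Rightarrow> real^'n.
          continuous_on {0..} \<Theta> \<and> bounded (\<Theta> ` {0..})
          \<and> (\<forall>t\<ge>0. \<Theta> t = \<Theta> 0 - integral {0..t} (\<lambda>s. G (\<Theta> s)))
          \<and> (\<forall>\<theta>. G \<theta> = 0 \<and> ereal (Linf \<theta>) > (INF v. ereal (Linf v))
                 \<longrightarrow> Linf (\<Theta> 0) < Linf \<theta>)
          \<longrightarrow> Limsup at_top (\<lambda>t. ereal (Linf (\<Theta> t))) = (INF v. ereal (Linf v))"
  proof (intro allI impI)
    fix \<Theta> :: "real \<Rightarrow> real^'n"
    assume A: "continuous_on {0..} \<Theta> \<and> bounded (\<Theta> ` {0..})
          \<and> (\<forall>t\<ge>0. \<Theta> t = \<Theta> 0 - integral {0..t} (\<lambda>s. G (\<Theta> s)))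
          \<and> (\<forall>\<theta>. G \<theta> = 0 \<and> ereal (Linf \<theta>) > (INF v. ereal (Linf v))
                 \<longrightarrow> Linf (\<Theta> 0) < Linf \<theta>)"
    obtain v where v: "G v = 0" "Limsup at_top (\<lambda>t. ereal (Linf (\<Theta> t))) = ereal (Linf v)" "Linf v \<le> Linf (\<Theta> 0)"
      using traj[of \<Theta>] A by blast
    have le: "(INF w. ereal (Linf w)) \<le> ereal (Linf v)" by (rule INF_lower) simp
    have "\<not> ereal (Linf v) > (INF w. ereal (Linf w))"
    proof
      assume "ereal (Linf v) > (INF w. ereal (Linf w))"
      then have "Linf (\<Theta> 0) < Linf v" using A v(1) by blast
      then show False using v(3) by simp
    qed
    then have "ereal (Linf v) = (INF w. ereal (Linf w))" using le by simp
    then show "Limsup at_top (\<lambda>t. ereal (Linf (\<Theta> t))) = (INF v. ereal (Linf v))" using v(2) by simp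
  qed
  show ?thesis using part1 part2 part3 part4 part5 by blast
qed


end
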